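(* Let $s,k$ be positive integers with $s>2\cdot10^6$, and let $n=\lceil 3e(s+1)k\rceil$. Let $\mathcal F_1,\ldots,\mathcal F_{s+1}\subset\binom{[n]}{k}$ be shifted and cross-dependent families. Suppose that $$|\mathcal F_i(s+1)|<s^{-4}\binom{n-s-1}{k-1}\quad\text{for all } i\in[s+1],$$ and that at least one of the families $\mathcal F_i$ does not coincide with $\mathcal A$. Then $\min_{i\in[s+1]}|\mathcal F_i|<\binom{n}{k}-\binom{n-s}{k}$.
   Context: $[n]=\{1,\ldots,n\}$; $\binom{X}{k}$ is the family of all $k$-subsets of $X$. $\mathcal A:=\{F\in\binom{[n]}{k}:F\cap[s]\ne\emptyset\}$. Families $\mathcal F_1,\ldots,\mathcal F_{s+1}$ are cross-dependent if there are no pairwise disjoint $F_1,\ldots,F_{s+1}$ with $F_i\in\mathcal F_i$ for all $i$. A family $\mathcal F\subset\binom{[n]}{k}$ is shifted if whenever $A\in\mathcal F$ and $B$ is obtained from $A$ by replacing some elements with smaller elements (not in the set), then $B\in\mathcal F$. For a family $\mathcal G$ and $j\in[s+1]$, $\mathcal G(j):=\{A\setminus\{j\}: A\in\mathcal G,\ A\cap[s+1]=\{j\}\}$. *)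

theory Defs
  imports Complex_Main
begin

definition ksubsets :: "'a set \<Rightarrow> nat \<Rightarrow> 'a set set" where
  "ksubsets X k = {F. F \<subseteq> X \<and> card F = k}"

definition famA :: "nat \<Rightarrow> nat \<Rightarrow> nat \<Rightarrow> nat set set" where
  "famA n k s = {F \<in> ksubsets {1..n} k. F \<inter> {1..s} \<noteq> {}}"

definition cross_dependent :: "nat \<Rightarrow> (nat \<Rightarrow> nat set set) \<Rightarrow> bool" where
  "cross_dependent s F \<longleftrightarrow>
     \<not> (\<exists>G. (\<forall>i\<in>{1..s+1}. G i \<in> F i) \<and>
            (\<forall>i\<in>{1..s+1}. \<forall>j\<in>{1..s+1}. i \<noteq> j \<longrightarrow> G i \<inter> G j = {}))"

definition shifted :: "nat \<Rightarrow> nat set set \<Rightarrow> bool" where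
  "shifted n \<F> \<longleftrightarrow>
     (\<forall>A\<in>\<F>. \<forall>X Y g. X \<subseteq> A \<and> Y \<subseteq> {1..n} \<and> Y \<inter> A = {} \<and>
        bij_betw g X Y \<and> (\<forall>x\<in>X. g x < x) \<longrightarrow> (A - X) \<union> Y \<in> \<F>)"

definition restr :: "nat \<Rightarrow> nat set set \<Rightarrow> nat \<Rightarrow> nat set set" where
  "restr s \<G> j = {A - {j} | A. A \<in> \<G> \<and> A \<inter> {1..s+1} = {j}}"

end

theory Submission
  imports Defs "HOL-Library.Infinite_Set"
begin

lemma R1: "real q ^ q \<le> exp (real q) * fact q"
proof (induction q)
  case 0 then show ?case by simp
next
  case (Suc q)
  have e: "(1 + 1 / real q) ^ q \<le> exp 1" if "q > 0"
  proof -
    have "(1 + 1 / real q) ^ q \<le> exp (1 / real q) ^ q"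
      by (rule power_mono) (use exp_ge_add_one_self[of "1/real q"] in auto)
    also have "\<dots> = exp 1" using that by (simp add: exp_of_nat_mult[symmetric])
    finally show ?thesis .
  qed
  have "real (Suc q) ^ q \<le> real q ^ q * exp 1"
  proof (cases "q = 0")
    case True then show ?thesis by simp
  next
    case False
    have "real (Suc q) = real q * (1 + 1 / real q)" using False by (simp add: field_simps)
    then have "real (Suc q) ^ q = (real q * (1 + 1 / real q)) ^ q" by simp
    also have "\<dots> = real q ^ q * (1 + 1/real q)^q" by (simp add: power_mult_distrib)
    also have "\<dots> \<le> real q ^ q * exp 1" using e False by (intro mult_left_mono) auto
    finally show ?thesis .
  qed
  also have "\<dots> \<le> exp (real q) * fact q * exp 1" using Suc.IH by (intro mult_right_mono) auto
  finally have h: "real (Suc q) ^ q \<le> exp (real q) * fact q * exp 1" .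
  have "real (Suc q) ^ Suc q = real (Suc q) * real (Suc q) ^ q" by simp
  also have "\<dots> \<le> real (Suc q) * (exp (real q) * fact q * exp 1)" using h by (intro mult_left_mono) auto
  also have "\<dots> = exp (real (Suc q)) * fact (Suc q)" by (simp add: exp_add[symmetric] algebra_simps)
  finally show ?case .
qed


lemma R2: "real ((c * q) choose q) \<le> (exp 1 * real c) ^ q"
proof -
  have a: "real ((c*q) choose q) * fact q \<le> real (c*q) ^ q"
  proof -
    have "((c*q) choose q) * fact q \<le> (c*q) ^ q" by (rule binomial_fact_pow)
    then have "real (((c*q) choose q) * fact q) \<le> real ((c*q) ^ q)" by (rule of_nat_mono)
    then show ?thesis by simp
  qed
  have b: "real (c*q) ^ q = real c ^ q * real q ^ q" by (simp add: power_mult_distrib)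
  have c: "real c ^ q * real q ^ q \<le> real c ^ q * (exp (real q) * fact q)"
    by (rule mult_left_mono[OF R1]) simp
  have "real ((c*q) choose q) * fact q \<le> real c ^ q * (exp (real q) * fact q)"
    using a b c by linarith
  then have "real ((c*q) choose q) * fact q \<le> (real c ^ q * exp (real q)) * fact q"
    by (simp only: mult.assoc)
  then have "real ((c*q) choose q) \<le> real c ^ q * exp (real q)"
    by (rule mult_right_le_imp_le) simp
  also have "exp (real q) = exp 1 ^ q" by (simp add: exp_of_nat_mult[symmetric])
  finally show ?thesis by (simp add: power_mult_distrib mult.commute)
qed


lemma R3: "q \<le> r \<Longrightarrow> r \<le> M \<Longrightarrow> real ((M - q) choose (r - q)) \<le> (real r / real M) ^ q * real (M choose r)"
proof (induction q arbitrary: M r)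
  case 0 then show ?case by simp
next
  case (Suc q)
  have r0: "r > 0" "M > 0" using Suc.prems by auto
  have key: "real ((M - 1) choose (r - 1)) = (real r / real M) * real (M choose r)"
    using times_binomial_minus1_eq[of r M] r0 by (simp add: field_simps) (metis of_nat_mult mult.commute)
  show ?case
  proof (cases "M = 1")
    case True then have "r = 1" "q = 0" using Suc.prems by auto
    then show ?thesis using True by simp
  next
    case False
    have ih: "real ((M - 1 - q) choose (r - 1 - q)) \<le> (real (r-1) / real (M-1)) ^ q * real ((M-1) choose (r-1))"
      using Suc.IH[of "r-1" "M-1"] Suc.prems by auto
    have le: "real (r-1) / real (M-1) \<le> real r / real M"
      using Suc.prems False r0 by (auto simp: field_simps of_nat_diff)
    have "real ((M - Suc q) choose (r - Suc q)) = real ((M - 1 - q) choose (r - 1 - q))" by simp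
    also have "\<dots> \<le> (real (r-1) / real (M-1)) ^ q * real ((M-1) choose (r-1))" by (rule ih)
    also have "\<dots> \<le> (real r / real M) ^ q * real ((M-1) choose (r-1))"
      by (intro mult_right_mono power_mono le) auto
    also have "\<dots> = (real r / real M) ^ q * ((real r / real M) * real (M choose r))" by (simp only: key)
    also have "\<dots> = (real r / real M) ^ Suc q * real (M choose r)" by (simp only: power_Suc mult_ac)
    finally show ?thesis .
  qed
qed

lemma R4: "r \<le> M \<Longrightarrow> 0 < M \<Longrightarrow> (1 - real r / real M) ^ d * real ((M + d) choose r) \<le> real (M choose r)"
proof (induction d)
  case 0 then show ?case by simp
next
  case (Suc d)
  have ab: "real (M + Suc d - r) * real ((M + Suc d) choose r) = real (M + Suc d) * real ((M + d) choose r)"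
    using binomial_absorb_comp[of "M + Suc d" r] by (metis of_nat_mult diff_Suc_1 add_Suc_right)
  have "1 - real r / real M \<le> 1 - real r / real (M + Suc d)"
    using Suc.prems by (auto simp: field_simps intro!: divide_left_mono)
  moreover have "0 \<le> 1 - real r / real M" using Suc.prems by (auto simp: field_simps)
  ultimately have "(1 - real r / real M) * real ((M + Suc d) choose r) \<le> (1 - real r / real (M + Suc d)) * real ((M + Suc d) choose r)"
    by (intro mult_right_mono) auto
  also have "\<dots> = real ((M + d) choose r)"
    using ab Suc.prems by (simp add: field_simps of_nat_diff)
  finally have "(1 - real r / real M) * real ((M + Suc d) choose r) \<le> real ((M + d) choose r)" .
  then have "(1 - real r / real M) ^ d * ((1 - real r / real M) * real ((M + Suc d) choose r)) \<le> (1 - real r / real M) ^ d * real ((M + d) choose r)"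
    using \<open>0 \<le> 1 - real r / real M\<close> by (intro mult_left_mono) auto
  then have "(1 - real r / real M) ^ Suc d * real ((M + Suc d) choose r) \<le> (1 - real r / real M) ^ d * real ((M + d) choose r)"
    by (simp only: power_Suc mult_ac)
  then show ?case using Suc by linarith
qed

lemma R5: "0 \<le> x \<Longrightarrow> x < 1 \<Longrightarrow> (\<Sum>i<r. x ^ Suc i) \<le> x / (1 - (x::real))"
proof -
  assume "0 \<le> x" "x < 1"
  have "(\<Sum>i<r. x ^ Suc i) = x * (\<Sum>i<r. x ^ i)" by (simp add: sum_distrib_left)
  also have "(\<Sum>i<r. x ^ i) = (1 - x^r) / (1 - x)" using \<open>x<1\<close> by (simp add: sum_gp_strict)
  also have "x * ((1 - x^r) / (1 - x)) \<le> x / (1 - x)"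
  proof -
    have "x * (1 - x^r) \<le> x" using \<open>0\<le>x\<close> \<open>x<1\<close> by (simp add: mult_left_le)
    then show ?thesis using \<open>x<1\<close> by (simp add: divide_right_mono)
  qed
  finally show ?thesis .
qed


lemma finite_ksubsets[simp]: "finite X \<Longrightarrow> finite (ksubsets X k)"
  unfolding ksubsets_def by (rule finite_subset[of _ "Pow X"]) auto

lemma card_ksubsets: "finite X \<Longrightarrow> card (ksubsets X k) = card X choose k"
  unfolding ksubsets_def by (rule n_subsets)

lemma card_ksubsets_containing:
  assumes "finite Z" "S \<subseteq> Z" "card S = q" "q \<le> r"
  shows "card {G \<in> ksubsets Z r. S \<subseteq> G} = (card Z - q) choose (r - q)"
proof -
  have fS: "finite S" using assms finite_subset by blast
  have eq: "{G \<in> ksubsets Z r. S \<subseteq> G} = (\<lambda>T. T \<union> S) ` ksubsets (Z - S) (r - q)"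
  proof (intro equalityI subsetI)
    fix G assume "G \<in> {G \<in> ksubsets Z r. S \<subseteq> G}"
    then have G: "G \<subseteq> Z" "card G = r" "S \<subseteq> G" by (auto simp: ksubsets_def)
    have "finite G" using G assms finite_subset by blast
    have "G - S \<in> ksubsets (Z - S) (r - q)"
      using G assms \<open>finite G\<close> finite_subset[OF G(3)] by (auto simp: ksubsets_def card_Diff_subset)
    moreover have "G = (G - S) \<union> S" using G by auto
    ultimately show "G \<in> (\<lambda>T. T \<union> S) ` ksubsets (Z - S) (r - q)" by blast
  next
    fix G assume "G \<in> (\<lambda>T. T \<union> S) ` ksubsets (Z - S) (r - q)"
    then obtain T where T: "T \<subseteq> Z - S" "card T = r - q" "G = T \<union> S" by (auto simp: ksubsets_def)
    have "finite T" using T assms finite_subset by (metis finite_Diff)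
    have "card G = r" using T fS \<open>finite T\<close> assms by (subst T(3), subst card_Un_disjoint) auto
    then show "G \<in> {G \<in> ksubsets Z r. S \<subseteq> G}" using T assms by (auto simp: ksubsets_def)
  qed
  have inj: "inj_on (\<lambda>T. T \<union> S) (ksubsets (Z - S) (r - q))"
    by (rule inj_onI) (auto simp: ksubsets_def)
  have "card {G \<in> ksubsets Z r. S \<subseteq> G} = card (ksubsets (Z - S) (r - q))"
    by (simp add: eq card_image[OF inj])
  also have "\<dots> = (card Z - q) choose (r - q)"
    using assms by (simp add: card_ksubsets card_Diff_subset fS)
  finally show ?thesis .
qed

lemma count_ge:
  assumes "finite Z" "P \<subseteq> Z" "q \<le> r"
  shows "card {G \<in> ksubsets Z r. q \<le> card (G \<inter> P)} \<le> (card P choose q) * ((card Z - q) choose (r - q))"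
proof -
  have fP: "finite P" using assms finite_subset by blast
  have sub: "{G \<in> ksubsets Z r. q \<le> card (G \<inter> P)} \<subseteq> (\<Union>S\<in>ksubsets P q. {G \<in> ksubsets Z r. S \<subseteq> G})"
  proof
    fix G assume G: "G \<in> {G \<in> ksubsets Z r. q \<le> card (G \<inter> P)}"
    then have "finite (G \<inter> P)" using fP by blast
    then obtain S where "S \<subseteq> G \<inter> P" "card S = q" using G obtain_subset_with_card_n by blast
    then show "G \<in> (\<Union>S\<in>ksubsets P q. {G \<in> ksubsets Z r. S \<subseteq> G})"
      using G by (auto simp: ksubsets_def)
  qed
  have "card {G \<in> ksubsets Z r. q \<le> card (G \<inter> P)} \<le> card (\<Union>S\<in>ksubsets P q. {G \<in> ksubsets Z r. S \<subseteq> G})"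
    by (rule card_mono[OF _ sub]) (auto intro!: finite_UN_I simp: fP assms(1))
  also have "\<dots> \<le> (\<Sum>S\<in>ksubsets P q. card {G \<in> ksubsets Z r. S \<subseteq> G})"
    by (rule card_UN_le) (simp add: fP)
  also have "\<dots> = (\<Sum>S\<in>ksubsets P q. (card Z - q) choose (r - q))"
  proof (rule sum.cong[OF refl])
    fix S assume "S \<in> ksubsets P q"
    then show "card {G \<in> ksubsets Z r. S \<subseteq> G} = (card Z - q) choose (r - q)"
      using assms by (intro card_ksubsets_containing) (auto simp: ksubsets_def)
  qed
  also have "\<dots> = (card P choose q) * ((card Z - q) choose (r - q))"
    by (simp add: card_ksubsets fP)
  finally show ?thesis .
qed

lemma single_shift:
  assumes "shifted n F" "H \<in> F" "z \<in> H" "w \<notin> H" "w \<in> {1..n}" "w < z"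
  shows "insert w (H - {z}) \<in> F"
proof -
  have "(H - {z}) \<union> {w} \<in> F"
    using assms unfolding shifted_def
    by (elim ballE[of _ _ H] allE[of _ "{z}"] allE[of _ "{w}"] allE[of _ "\<lambda>_. w"]) (auto simp: bij_betw_def)
  then show ?thesis by simp
qed


definition domi :: "nat set \<Rightarrow> nat set \<Rightarrow> bool" where
  "domi G R \<longleftrightarrow> (\<forall>c. card (G \<inter> {..c}) \<le> card (R \<inter> {..c}))"

lemma card_split_at: "finite A \<Longrightarrow> card A = card (A \<inter> {..c}) + card (A \<inter> {c<..})" for c :: nat
proof -
  assume "finite A"
  have "A = (A \<inter> {..c}) \<union> (A \<inter> {c<..})" by (auto simp add: not_less)
  moreover have "(A \<inter> {..c}) \<inter> (A \<inter> {c<..}) = {}" by auto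
  ultimately show ?thesis using \<open>finite A\<close> by (metis card_Un_disjoint finite_Int)
qed

lemma dom_step_lt:
  assumes fin: "finite G" "finite R" and cd: "card G = card R" and d: "domi G R"
    and z: "z = Max (G - R)" "G - R \<noteq> {}" and w: "w = Max (R - G)" "R - G \<noteq> {}"
  shows "w < z"
proof (rule ccontr)
  assume "\<not> w < z"
  have wR: "w \<in> R" "w \<notin> G" using w Max_in[of "R - G"] fin by auto
  have zG: "z \<in> G" "z \<notin> R" using z Max_in[of "G - R"] fin by auto
  then have "z < w" using \<open>\<not> w < z\<close> wR by (cases "z = w") auto
  then have w1: "w \<ge> 1" by simp
  define c where "c = w - 1"
  have "G \<inter> {c<..} \<subseteq> (R \<inter> {c<..}) - {w}"
  proof
    fix v assume v: "v \<in> G \<inter> {c<..}"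
    have "v \<in> R"
    proof (rule ccontr)
      assume "v \<notin> R"
      then have "v \<le> Max (G - R)" using v fin by (intro Max_ge) auto
      then have "v \<le> z" using z by simp
      then show False using v \<open>z < w\<close> c_def by auto
    qed
    then show "v \<in> (R \<inter> {c<..}) - {w}" using v wR by auto
  qed
  then have "card (G \<inter> {c<..}) \<le> card ((R \<inter> {c<..}) - {w})" by (intro card_mono) (use fin in auto)
  also have "\<dots> < card (R \<inter> {c<..})" using wR w1 c_def fin by (intro card_Diff1_less) auto
  finally have "card (G \<inter> {c<..}) < card (R \<inter> {c<..})" .
  then have "card (R \<inter> {..c}) < card (G \<inter> {..c})"
    using card_split_at[OF fin(1), of c] card_split_at[OF fin(2), of c] cd by linarith
  then show False using d unfolding domi_def by (metis not_le)
qed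

lemma dom_step_dom:
  assumes fin: "finite G" "finite R" and cd: "card G = card R" and d: "domi G R"
    and z: "z = Max (G - R)" "G - R \<noteq> {}" and w: "w = Max (R - G)" "R - G \<noteq> {}"
  shows "domi (insert w (G - {z})) R"
  unfolding domi_def
proof
  fix c
  have wz: "w < z" by (rule dom_step_lt[OF assms])
  have wR: "w \<in> R" "w \<notin> G" using w Max_in[of "R - G"] fin by auto
  have zG: "z \<in> G" "z \<notin> R" using z Max_in[of "G - R"] fin by auto
  have dc: "card (G \<inter> {..c}) \<le> card (R \<inter> {..c})" using d unfolding domi_def by blast
  consider "c < w" | "z \<le> c" | "w \<le> c" "c < z" by linarith
  then show "card (insert w (G - {z}) \<inter> {..c}) \<le> card (R \<inter> {..c})"
  proof cases
    case 1
    then have "insert w (G - {z}) \<inter> {..c} = G \<inter> {..c}" using wz by auto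
    then show ?thesis using dc by simp
  next
    case 2
    then have "insert w (G - {z}) \<inter> {..c} = insert w ((G \<inter> {..c}) - {z})" using wz by auto
    moreover have "card (insert w ((G \<inter> {..c}) - {z})) = card (G \<inter> {..c})"
    proof -
      have "card (insert w ((G \<inter> {..c}) - {z})) = Suc (card ((G \<inter> {..c}) - {z}))"
        using wR fin by (intro card_insert_disjoint) auto
      also have "\<dots> = card (G \<inter> {..c})" using zG 2 fin by (intro card_Suc_Diff1) auto
      finally show ?thesis .
    qed
    ultimately show ?thesis using dc by simp
  next
    case 3
    then have e: "insert w (G - {z}) \<inter> {..c} = insert w (G \<inter> {..c})" by auto
    have "R \<inter> {c<..} \<subseteq> (G \<inter> {c<..}) - {z}"
    proof
      fix v assume v: "v \<in> R \<inter> {c<..}"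
      have "v \<in> G"
      proof (rule ccontr)
        assume "v \<notin> G"
        then have "v \<le> Max (R - G)" using v fin by (intro Max_ge) auto
        then have "v \<le> w" using w by simp
        then show False using v 3 by auto
      qed
      then show "v \<in> (G \<inter> {c<..}) - {z}" using v zG by auto
    qed
    then have "card (R \<inter> {c<..}) \<le> card ((G \<inter> {c<..}) - {z})" by (intro card_mono) (use fin in auto)
    also have "\<dots> < card (G \<inter> {c<..})" using zG 3 fin by (intro card_Diff1_less) auto
    finally have "card (R \<inter> {c<..}) < card (G \<inter> {c<..})" .
    then have "card (G \<inter> {..c}) < card (R \<inter> {..c})"
      using card_split_at[OF fin(1), of c] card_split_at[OF fin(2), of c] cd by linarith
    moreover have "card (insert w (G \<inter> {..c})) = Suc (card (G \<inter> {..c}))" using wR fin by simp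
    ultimately show ?thesis using e by simp
  qed
qed

lemma dom_shift:
  assumes "shifted n F" "R \<subseteq> {1..n}" "x \<notin> R"
  shows "finite G \<Longrightarrow> finite R \<Longrightarrow> card G = card R \<Longrightarrow> x \<notin> G \<Longrightarrow> domi G R \<Longrightarrow> insert x G \<in> F \<Longrightarrow> insert x R \<in> F"
proof (induction "card (G - R)" arbitrary: G rule: less_induct)
  case less
  show ?case
  proof (cases "G - R = {}")
    case True
    then have "G \<subseteq> R" by auto
    then have "G = R" using less.prems by (metis card_subset_eq)
    then show ?thesis using less.prems by simp
  next
    case False
    have RG: "R - G \<noteq> {}"
    proof
      assume "R - G = {}"
      then have "R \<subseteq> G" by auto
      then have "R = G" using less.prems by (metis card_subset_eq)
      then show False using False by simp
    qed
    define z where "z = Max (G - R)"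
    define w where "w = Max (R - G)"
    have wz: "w < z" using dom_step_lt[OF less.prems(1,2,3,5) z_def False w_def RG] .
    have wR: "w \<in> R" "w \<notin> G" using w_def Max_in[of "R - G"] less.prems RG by auto
    have zG: "z \<in> G" "z \<notin> R" using z_def Max_in[of "G - R"] less.prems False by auto
    define G' where "G' = insert w (G - {z})"
    have dG': "domi G' R" unfolding G'_def using dom_step_dom[OF less.prems(1,2,3,5) z_def False w_def RG] .
    have cG': "card G' = card R"
    proof -
      have "card G' = Suc (card (G - {z}))" unfolding G'_def using wR less.prems by (intro card_insert_disjoint) auto
      also have "\<dots> = card G" using zG less.prems by (intro card_Suc_Diff1) auto
      finally show ?thesis using less.prems by simp
    qed
    have xG': "x \<notin> G'" unfolding G'_def using less.prems wR assms(3) by auto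
    have wn: "w \<in> {1..n}" using wR assms(2) by auto
    have "insert w (insert x G - {z}) \<in> F"
      using single_shift[OF assms(1) less.prems(6), of z w] zG wR wz wn assms(3) by auto
    moreover have "insert w (insert x G - {z}) = insert x G'" unfolding G'_def using zG less.prems by auto
    ultimately have inF: "insert x G' \<in> F" by simp
    have "G' - R = (G - R) - {z}" unfolding G'_def using wR by auto
    then have "card (G' - R) < card (G - R)" using zG less.prems by (metis DiffI card_Diff1_less finite_Diff)
    then show ?thesis using less.hyps[of G'] less.prems dG' cG' xG' inF unfolding G'_def by auto
  qed
qed


lemma infinite_W: "finite B \<Longrightarrow> infinite ({lo::nat..} - B)"
  by (metis Diff_infinite_finite infinite_Ici)

lemma enum_count:
  fixes lo :: nat
  assumes "finite B"
  shows "Suc (enumerate ({lo..} - B) p) = lo + Suc p + card (B \<inter> {lo..enumerate ({lo..} - B) p})"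
proof -
  define W where "W = {lo..} - B"
  define u where "u = enumerate W"
  have inf: "infinite W" unfolding W_def using infinite_W[OF assms] .
  have uW: "\<And>q. u q \<in> W" unfolding u_def using enumerate_in_set[OF inf] .
  have mono: "\<And>a b. a < b \<Longrightarrow> u a < u b" unfolding u_def using enumerate_mono[OF _ inf] by blast
  have img: "W \<inter> {..u p} = u ` {..p}"
  proof (intro equalityI subsetI)
    fix z assume z: "z \<in> W \<inter> {..u p}"
    then obtain q where q: "u q = z" unfolding u_def using enumerate_Ex[OF inf] by blast
    have "q \<le> p" using z q mono by (metis IntD2 atMost_iff leD leI)
    then show "z \<in> u ` {..p}" using q by auto
  next
    fix z assume "z \<in> u ` {..p}"
    then obtain q where "q \<le> p" "z = u q" by auto
    then show "z \<in> W \<inter> {..u p}" using uW mono by (metis IntI atMost_iff le_eq_less_or_eq)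
  qed
  have inj: "inj u" unfolding u_def using inj_enumerate[OF inf] by simp
  have c1: "card (W \<inter> {..u p}) = Suc p"
    using img card_image[OF inj_on_subset[OF inj subset_UNIV]] by simp
  have lo_le: "lo \<le> u p" using uW[of p] unfolding W_def by auto
  have split: "{lo..u p} = (W \<inter> {..u p}) \<union> (B \<inter> {lo..u p})" unfolding W_def by auto
  have disj: "(W \<inter> {..u p}) \<inter> (B \<inter> {lo..u p}) = {}" unfolding W_def by auto
  have "card {lo..u p} = card (W \<inter> {..u p}) + card (B \<inter> {lo..u p})"
    by (subst split, rule card_Un_disjoint) (use disj in auto)
  then show ?thesis using c1 lo_le unfolding u_def W_def by simp
qed

lemma arith_core:
  fixes S B T P Q X :: int
  assumes "S \<ge> 1" "B \<ge> 0" "T \<ge> 0" "P \<ge> 0" "Q \<ge> 1"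
    "2*S*B < 2*S*T + P + 1 + B" "P + 1 \<le> S*Q" "X = P + B - 2*T"
  shows "X \<le> (S+1)*Q"
proof (rule ccontr)
  assume "\<not> ?thesis"
  then have h: "B \<ge> (S+1)*Q + 1 + 2*T - P" using assms by linarith
  have "(2*S-1)*B \<ge> (2*S-1)*((S+1)*Q + 1 + 2*T - P)" using h assms(1) by (intro mult_left_mono) auto
  then have h1: "2*(S*B) - B \<ge> 2*(S*S*Q) + S*Q - Q + 2*S - 1 + 4*(S*T) - 2*T - 2*(S*P) + P"
    by (simp add: algebra_simps)
  have h2: "2*(S*B) < 2*(S*T) + P + 1 + B" using assms(6) by (simp add: algebra_simps)
  have "S*(P + 1) \<le> S*(S*Q)" using assms by (intro mult_left_mono) auto
  then have h3: "S*P + S \<le> S*S*Q" by (simp add: algebra_simps)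
  have h4: "S*T \<ge> T" using mult_right_mono[of 1 S T] assms by simp
  have h5: "S*Q \<ge> Q" using assms by simp
  show False using h1 h2 h3 h4 h5 assms(1) by linarith
qed

lemma arith_pos:
  fixes s U lo p beta t i :: nat
  assumes s: "s \<ge> 1" and U: "U + 1 = lo + Suc p + beta" and d: "2*s*beta < 2*s*t + (U + 1 - lo)"
    and p: "p + 1 \<le> s*(i+1)"
  shows "U - (lo + 2*t) \<le> (s+1)*(i+1)"
proof (cases "U < lo + 2*t")
  case True then show ?thesis by simp
next
  case False
  have d': "2*s*beta < 2*s*t + p + 1 + beta" using d U by simp
  have i1: "int (2*s*beta) < int (2*s*t + p + 1 + beta)" using d' by (simp only: of_nat_less_iff)
  have i2: "int (p + 1) \<le> int (s*(i+1))" using p by (simp only: of_nat_le_iff)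
  have X: "int (U - (lo + 2*t)) = int p + int beta - 2*int t" using False U by simp
  have "int (U - (lo + 2*t)) \<le> (int s + 1) * int (i+1)"
  proof (rule arith_core[of "int s" "int beta" "int t" "int p" "int (i+1)"])
    show "1 \<le> int s" using s by simp
    show "2 * int s * int beta < 2 * int s * int t + int p + 1 + int beta" using i1 by simp
    show "int p + 1 \<le> int s * int (i + 1)" using i2 by (simp add: distrib_left)
    show "int (U - (lo + 2 * t)) = int p + int beta - 2 * int t" using X .
  qed auto
  then have "int (U - (lo + 2*t)) \<le> int ((s+1)*(i+1))" by (simp only: of_nat_add of_nat_mult of_nat_1)
  then show ?thesis by (simp only: of_nat_le_iff)
qed


definition rr :: "nat \<Rightarrow> nat set \<Rightarrow> nat \<Rightarrow> nat \<Rightarrow> nat \<Rightarrow> nat set" where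
  "rr lo B s r j = (\<lambda>i. enumerate ({lo..} - B) (j + s*i)) ` {..<r}"

context
  fixes lo :: nat and B :: "nat set" and s r :: nat
  assumes finB: "finite B" and s1: "s \<ge> 1"
begin

abbreviation "u \<equiv> enumerate ({lo..} - B)"

lemma u_mono: "a < b \<Longrightarrow> u a < u b"
  using enumerate_mono[OF _ infinite_W[OF finB]] by blast

lemma u_mono_le: "a \<le> b \<Longrightarrow> u a \<le> u b"
  using u_mono by (metis le_eq_less_or_eq)

lemma u_in: "u p \<in> {lo..} - B"
  using enumerate_in_set[OF infinite_W[OF finB]] by blast

lemma u_inj: "u a = u b \<Longrightarrow> a = b"
  using u_mono by (metis linorder_neqE_nat less_irrefl)

lemma idx_inj: "j + s*i = j' + s*i' \<Longrightarrow> j < s \<Longrightarrow> j' < s \<Longrightarrow> j = j' \<and> i = i'"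
proof -
  assume h: "j + s*i = j' + s*i'" "j < s" "j' < s"
  have a: "(j + s*i) mod s = j" using h(2) by simp
  have b: "(j' + s*i') mod s = j'" using h(3) by simp
  have "j = j'" using a b h(1) by metis
  then show ?thesis using h s1 by simp
qed

lemma rr_card: "j < s \<Longrightarrow> card (rr lo B s r j) = r"
  unfolding rr_def
  by (subst card_image) (auto intro!: inj_onI dest: u_inj idx_inj)

lemma rr_disj_B: "rr lo B s r j \<inter> B = {}"
  unfolding rr_def using u_in by auto

lemma rr_disj: "j < s \<Longrightarrow> j' < s \<Longrightarrow> j \<noteq> j' \<Longrightarrow> rr lo B s r j \<inter> rr lo B s r j' = {}"
  unfolding rr_def by (auto dest: u_inj idx_inj)

lemma rr_finite: "finite (rr lo B s r j)"
  unfolding rr_def by simp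

lemma u_bound: "u p \<le> lo + p + card B" "lo \<le> u p"
proof -
  have "Suc (u p) = lo + Suc p + card (B \<inter> {lo..u p})" by (rule enum_count[OF finB])
  moreover have "card (B \<inter> {lo..u p}) \<le> card B" using finB by (intro card_mono) auto
  ultimately show "u p \<le> lo + p + card B" by linarith
  show "lo \<le> u p" using u_in by auto
qed

lemma rr_sub: "j < s \<Longrightarrow> card B = r \<Longrightarrow> lo + s*r + r \<le> Suc n \<Longrightarrow> rr lo B s r j \<subseteq> {lo..n}"
proof
  fix x assume j: "j < s" and cB: "card B = r" and n: "lo + s*r + r \<le> Suc n" and x: "x \<in> rr lo B s r j"
  then obtain i where i: "i < r" "x = u (j + s*i)" unfolding rr_def by auto
  have "j + s*i + 1 \<le> s*r"
  proof -
    have "s*i + s \<le> s*r" using i s1 by (metis Suc_leI add.commute mult_Suc_right mult_le_mono2)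
    then show ?thesis using j by linarith
  qed
  then show "x \<in> {lo..n}" using u_bound[of "j + s*i"] i cB n by auto
qed

lemma rr_fail:
  assumes j: "j < s" and G: "G \<subseteq> {y..}" "finite G" "card G = r" and nd: "\<not> domi G (rr lo B s r j)"
  shows "\<exists>i<r. Suc i \<le> card (G \<inter> {y..<u (j + s*i)})"
proof -
  define R where "R = rr lo B s r j"
  obtain c where c: "card (R \<inter> {..c}) < card (G \<inter> {..c})" using nd unfolding domi_def R_def by (auto simp: not_le)
  define i where "i = card (R \<inter> {..c})"
  have "card (G \<inter> {..c}) \<le> r" using G by (metis card_mono inf_le1)
  then have ir: "i < r" using c i_def by linarith
  have cu: "c < u (j + s*i)"
  proof (rule ccontr)
    assume "\<not> c < u (j + s*i)"
    have "(\<lambda>i'. u (j + s*i')) ` {..i} \<subseteq> R \<inter> {..c}"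
    proof
      fix x assume "x \<in> (\<lambda>i'. u (j + s*i')) ` {..i}"
      then obtain i' where i': "i' \<le> i" "x = u (j + s*i')" by auto
      have "x \<in> R" unfolding R_def rr_def using i' ir by auto
      moreover have "x \<le> c"
      proof -
        have "j + s*i' \<le> j + s*i" using i' by simp
        then have "x \<le> u (j + s*i)" using i' u_mono_le by blast
        then show ?thesis using \<open>\<not> c < u (j + s*i)\<close> by simp
      qed
      ultimately show "x \<in> R \<inter> {..c}" by simp
    qed
    then have "card ((\<lambda>i'. u (j + s*i')) ` {..i}) \<le> card (R \<inter> {..c})"
      by (intro card_mono) (auto simp: R_def rr_finite)
    moreover have "card ((\<lambda>i'. u (j + s*i')) ` {..i}) = Suc i"
    proof -
      have "inj_on (\<lambda>i'. u (j + s*i')) {..i}"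
      proof (rule inj_onI)
        fix a b assume "u (j + s*a) = u (j + s*b)"
        then have "j + s*a = j + s*b" by (rule u_inj)
        then show "a = b" using s1 by simp
      qed
      then show ?thesis by (simp add: card_image)
    qed
    ultimately show False unfolding i_def by simp
  qed
  have "G \<inter> {..c} \<subseteq> G \<inter> {y..<u (j + s*i)}" using G cu by auto
  then have "card (G \<inter> {..c}) \<le> card (G \<inter> {y..<u (j + s*i)})" using G by (intro card_mono) auto
  then show ?thesis using ir c i_def by (intro exI[of _ i]) auto
qed

end


lemma up_lower:
  fixes lo n s r j t :: nat and B :: "nat set"
  assumes finB: "finite B" and s1: "s \<ge> 1" and cB: "card B = r" and room: "lo + s*r + r \<le> Suc n"
    and j: "j < s"
    and nd: "\<forall>x\<in>{lo..n}. \<not> (2*s*t + (x + 1 - lo) \<le> 2*s*card (B \<inter> {lo..x}))"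
  shows "real (card {G \<in> ksubsets {lo + 2*t..n} r. domi G (rr lo B s r j)})
     \<ge> real (card {lo + 2*t..n} choose r)
       - (\<Sum>i<r. real (((s+1)*Suc i) choose Suc i) * real ((card {lo + 2*t..n} - Suc i) choose (r - Suc i)))"
proof -
  define y where "y = lo + 2*t"
  define Z where "Z = {y..n}"
  define R where "R = rr lo B s r j"
  define U where "U = {G \<in> ksubsets Z r. domi G R}"
  let ?u = "enumerate ({lo..} - B)"
  define P where "P = (\<lambda>i. {y..<?u (j + s*i)})"
  have RZ: "R \<subseteq> {lo..n}" unfolding R_def using rr_sub[OF finB s1 j cB room] .
  have uin: "\<And>i. i < r \<Longrightarrow> ?u (j + s*i) \<in> {lo..n}" using RZ unfolding R_def rr_def by auto
  have PZ: "\<And>i. i < r \<Longrightarrow> P i \<subseteq> Z"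
  proof -
    fix i assume i: "i < r"
    show "P i \<subseteq> Z" using uin[OF i] unfolding P_def Z_def by auto
  qed
  have cP: "\<And>i. i < r \<Longrightarrow> card (P i) \<le> (s+1)*Suc i"
  proof -
    fix i assume i: "i < r"
    define p where "p = j + s*i"
    have U: "?u p + 1 = lo + Suc p + card (B \<inter> {lo..?u p})" using enum_count[OF finB, of lo p] by simp
    have d: "2*s*card (B \<inter> {lo..?u p}) < 2*s*t + (?u p + 1 - lo)"
      using nd uin[OF i] unfolding p_def by (simp add: not_le)
    have pp: "p + 1 \<le> s*(i+1)" unfolding p_def using j by simp
    have "?u p - (lo + 2*t) \<le> (s+1)*(i+1)" by (rule arith_pos[OF s1 U d pp])
    then show "card (P i) \<le> (s+1)*Suc i" unfolding P_def y_def p_def by simp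
  qed
  have fin: "finite Z" unfolding Z_def by simp
  have comp: "ksubsets Z r - U \<subseteq> (\<Union>i<r. {G \<in> ksubsets Z r. Suc i \<le> card (G \<inter> P i)})"
  proof
    fix G assume G: "G \<in> ksubsets Z r - U"
    then have G1: "G \<subseteq> {y..}" "finite G" "card G = r" "\<not> domi G R"
      unfolding U_def Z_def ksubsets_def using finite_subset by auto
    obtain i where "i < r" "Suc i \<le> card (G \<inter> {y..<?u (j + s*i)})"
      using rr_fail[OF finB s1 j G1(1,2,3)] G1(4) unfolding R_def by blast
    then show "G \<in> (\<Union>i<r. {G \<in> ksubsets Z r. Suc i \<le> card (G \<inter> P i)})" using G unfolding P_def by auto
  qed
  have "card (ksubsets Z r - U) \<le> card (\<Union>i<r. {G \<in> ksubsets Z r. Suc i \<le> card (G \<inter> P i)})"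
    by (rule card_mono[OF _ comp]) (auto simp: fin)
  also have "\<dots> \<le> (\<Sum>i<r. card {G \<in> ksubsets Z r. Suc i \<le> card (G \<inter> P i)})" by (rule card_UN_le) simp
  also have "\<dots> \<le> (\<Sum>i<r. (((s+1)*Suc i) choose Suc i) * ((card Z - Suc i) choose (r - Suc i)))"
  proof (rule sum_mono)
    fix i assume "i \<in> {..<r}"
    then have i: "i < r" by simp
    have "card {G \<in> ksubsets Z r. Suc i \<le> card (G \<inter> P i)} \<le> (card (P i) choose Suc i) * ((card Z - Suc i) choose (r - Suc i))"
      using count_ge[OF fin PZ[OF i], of "Suc i" r] i by simp
    also have "\<dots> \<le> (((s+1)*Suc i) choose Suc i) * ((card Z - Suc i) choose (r - Suc i))"
      by (intro mult_right_mono binomial_right_mono cP i) simp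
    finally show "card {G \<in> ksubsets Z r. Suc i \<le> card (G \<inter> P i)} \<le> (((s+1)*Suc i) choose Suc i) * ((card Z - Suc i) choose (r - Suc i))" .
  qed
  finally have c1: "card (ksubsets Z r - U) \<le> (\<Sum>i<r. (((s+1)*Suc i) choose Suc i) * ((card Z - Suc i) choose (r - Suc i)))" .
  have "U \<subseteq> ksubsets Z r" unfolding U_def by auto
  then have "card (ksubsets Z r) = card U + card (ksubsets Z r - U)"
    using fin card_Diff_subset[of U "ksubsets Z r"] card_mono[of "ksubsets Z r" U] finite_subset[of U "ksubsets Z r"] by simp
  then have "real (card (ksubsets Z r)) \<le> real (card U) + real (\<Sum>i<r. (((s+1)*Suc i) choose Suc i) * ((card Z - Suc i) choose (r - Suc i)))"
  proof -
    have "card (ksubsets Z r) \<le> card U + (\<Sum>i<r. (((s+1)*Suc i) choose Suc i) * ((card Z - Suc i) choose (r - Suc i)))"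
      using c1 \<open>card (ksubsets Z r) = card U + card (ksubsets Z r - U)\<close> by linarith
    then show ?thesis by (simp only: of_nat_add[symmetric] of_nat_le_iff)
  qed
  moreover have "real (card (ksubsets Z r)) = real (card Z choose r)" using card_ksubsets[OF fin] by simp
  moreover have "real (\<Sum>i<r. (((s+1)*Suc i) choose Suc i) * ((card Z - Suc i) choose (r - Suc i)))
      = (\<Sum>i<r. real (((s+1)*Suc i) choose Suc i) * real ((card Z - Suc i) choose (r - Suc i)))"
    by (simp only: of_nat_sum of_nat_mult)
  ultimately show ?thesis unfolding U_def Z_def R_def y_def by linarith
qed


lemma term_bound:
  fixes c q r M :: nat and x :: real
  assumes "q \<le> r" "r \<le> M" "0 < M" "exp 1 * real c * real r \<le> x * real M"
  shows "real ((c*q) choose q) * real ((M - q) choose (r - q)) \<le> x ^ q * real (M choose r)"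
proof -
  have a: "real ((c*q) choose q) \<le> (exp 1 * real c) ^ q" by (rule R2)
  have b: "real ((M - q) choose (r - q)) \<le> (real r / real M) ^ q * real (M choose r)" using R3 assms by blast
  have "real ((c*q) choose q) * real ((M - q) choose (r - q)) \<le> (exp 1 * real c) ^ q * ((real r / real M) ^ q * real (M choose r))"
    using a b by (intro mult_mono) auto
  also have "\<dots> = (exp 1 * real c * real r / real M) ^ q * real (M choose r)"
    by (simp add: power_mult_distrib power_divide)
  also have "\<dots> \<le> x ^ q * real (M choose r)"
  proof (intro mult_right_mono power_mono)
    show "exp 1 * real c * real r / real M \<le> x" using assms by (simp add: divide_le_eq)
  qed auto
  finally show ?thesis .
qed

lemma sum_bound1:
  fixes s r M :: nat
  assumes "exp 1 * real (s+1) * real r \<le> (2/5) * real M" "r \<le> M" "0 < M"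
  shows "(\<Sum>i<r. real (((s+1)*Suc i) choose Suc i) * real ((M - Suc i) choose (r - Suc i))) \<le> (2/3) * real (M choose r)"
proof -
  have "(\<Sum>i<r. real (((s+1)*Suc i) choose Suc i) * real ((M - Suc i) choose (r - Suc i)))
      \<le> (\<Sum>i<r. (2/5) ^ Suc i * real (M choose r))"
    by (rule sum_mono) (rule term_bound, use assms in auto)
  also have "\<dots> = (\<Sum>i<r. (2/5::real) ^ Suc i) * real (M choose r)" by (simp add: sum_distrib_right)
  also have "\<dots> \<le> ((2/5) / (1 - 2/5)) * real (M choose r)" by (intro mult_right_mono R5) auto
  finally show ?thesis by simp
qed

lemma sum_bound2:
  fixes s r m t :: nat
  assumes "exp 1 * real (2*s) * real r \<le> (2/3) * real m" "r \<le> m" "0 < m"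
  shows "(\<Sum>b\<in>{1..r}. if t + b \<le> r then real ((2*s*b) choose (t+b)) * real ((m - (t+b)) choose (r - (t+b))) else 0)
     \<le> 2 * (2/3) ^ t * real (m choose r)"
proof -
  have "(\<Sum>b\<in>{1..r}. if t + b \<le> r then real ((2*s*b) choose (t+b)) * real ((m - (t+b)) choose (r - (t+b))) else 0)
     \<le> (\<Sum>b\<in>{1..r}. (2/3) ^ (t+b) * real (m choose r))"
  proof (rule sum_mono)
    fix b assume "b \<in> {1..r}"
    show "(if t + b \<le> r then real ((2*s*b) choose (t+b)) * real ((m - (t+b)) choose (r - (t+b))) else 0) \<le> (2/3) ^ (t+b) * real (m choose r)"
    proof (cases "t + b \<le> r")
      case True
      have "real ((2*s*b) choose (t+b)) \<le> real ((2*s*(t+b)) choose (t+b))"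
        by (simp add: binomial_right_mono)
      then have "real ((2*s*b) choose (t+b)) * real ((m - (t+b)) choose (r - (t+b)))
          \<le> real ((2*s*(t+b)) choose (t+b)) * real ((m - (t+b)) choose (r - (t+b)))"
        by (intro mult_right_mono) auto
      also have "\<dots> \<le> (2/3) ^ (t+b) * real (m choose r)"
        by (rule term_bound) (use True assms in auto)
      finally show ?thesis using True by simp
    qed simp
  qed
  also have "\<dots> = (2/3) ^ t * (\<Sum>b\<in>{1..r}. (2/3::real) ^ b) * real (m choose r)"
    by (simp add: sum_distrib_left sum_distrib_right power_add mult_ac)
  also have "(\<Sum>b\<in>{1..r}. (2/3::real) ^ b) = (\<Sum>i<r. (2/3::real) ^ Suc i)"
    by (rule sum.reindex_bij_witness[of _ Suc "\<lambda>b. b - 1"]) auto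
  also have "\<dots> \<le> (2/3) / (1 - 2/3)" by (rule R5) auto
  finally show ?thesis by (simp add: mult_right_mono)
qed


definition dense :: "nat \<Rightarrow> nat \<Rightarrow> nat \<Rightarrow> nat \<Rightarrow> nat \<Rightarrow> nat set set" where
  "dense lo n s r t = {B \<in> ksubsets {lo..n} r. \<exists>x\<in>{lo..n}. 2*s*t + (x + 1 - lo) \<le> 2*s*card (B \<inter> {lo..x})}"

lemma block_arith:
  fixes s L t c :: nat
  assumes s: "s \<ge> 1" and L: "L \<ge> 1" and h: "2*s*t + L \<le> 2*s*c"
  shows "\<exists>b\<ge>1. L \<le> 2*s*b \<and> t + b \<le> c"
proof -
  define b where "b = (L - 1) div (2*s) + 1"
  have dm: "L - 1 = 2*s*((L-1) div (2*s)) + (L-1) mod (2*s)" by simp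
  have md: "(L-1) mod (2*s) < 2*s" using s by simp
  have e: "2*s*b = 2*s*((L-1) div (2*s)) + 2*s" unfolding b_def by (simp add: distrib_left)
  have "L \<le> 2*s*b" using e dm md L by linarith
  moreover have "2*s*(b - 1) < L"
  proof -
    have "2*s*(b - 1) = 2*s*((L-1) div (2*s))" unfolding b_def by simp
    then show ?thesis using dm L by linarith
  qed
  ultimately have "2*s*(t + (b - 1)) < 2*s*c" using h by (simp add: distrib_left)
  then have "t + (b - 1) < c" by (metis mult_less_cancel1)
  then have "t + b \<le> c" unfolding b_def by simp
  then show ?thesis using \<open>L \<le> 2*s*b\<close> b_def by (intro exI[of _ b]) auto
qed

lemma dense_card:
  fixes lo n s r t :: nat
  assumes s: "s \<ge> 1"
  shows "card (dense lo n s r t) \<le> (\<Sum>b\<in>{1..r}. if t + b \<le> r then ((2*s*b) choose (t+b)) * ((card {lo..n} - (t+b)) choose (r - (t+b))) else 0)"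
proof -
  define Y where "Y = {lo..n}"
  define P where "P = (\<lambda>b. Y \<inter> {lo..<lo + 2*s*b})"
  have fY: "finite Y" unfolding Y_def by simp
  have sub: "dense lo n s r t \<subseteq> (\<Union>b\<in>{1..r}. {B \<in> ksubsets Y r. t + b \<le> card (B \<inter> P b)})"
  proof
    fix B assume B: "B \<in> dense lo n s r t"
    then obtain x where x: "x \<in> Y" "2*s*t + (x + 1 - lo) \<le> 2*s*card (B \<inter> {lo..x})" and BY: "B \<in> ksubsets Y r"
      unfolding dense_def Y_def by auto
    have L1: "x + 1 - lo \<ge> 1" using x(1) unfolding Y_def by auto
    obtain b where b: "b \<ge> 1" "x + 1 - lo \<le> 2*s*b" "t + b \<le> card (B \<inter> {lo..x})"
      using block_arith[OF s L1 x(2)] by blast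
    have "B \<subseteq> Y" using BY unfolding ksubsets_def by simp
    then have finB: "finite B" using fY by (rule finite_subset)
    have "B \<inter> {lo..x} \<subseteq> B \<inter> P b" using b(2) x(1) unfolding P_def Y_def by auto
    then have "card (B \<inter> {lo..x}) \<le> card (B \<inter> P b)" using finB by (intro card_mono) auto
    moreover have "card (B \<inter> {lo..x}) \<le> r"
    proof -
      have "card (B \<inter> {lo..x}) \<le> card B" using finB by (intro card_mono) auto
      then show ?thesis using BY unfolding ksubsets_def by simp
    qed
    ultimately have "b \<in> {1..r}" "t + b \<le> card (B \<inter> P b)" using b by auto
    then show "B \<in> (\<Union>b\<in>{1..r}. {B \<in> ksubsets Y r. t + b \<le> card (B \<inter> P b)})"
      using BY by blast
  qed
  have "card (dense lo n s r t) \<le> card (\<Union>b\<in>{1..r}. {B \<in> ksubsets Y r. t + b \<le> card (B \<inter> P b)})"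
    by (rule card_mono[OF _ sub]) (auto simp: fY)
  also have "\<dots> \<le> (\<Sum>b\<in>{1..r}. card {B \<in> ksubsets Y r. t + b \<le> card (B \<inter> P b)})" by (rule card_UN_le) simp
  also have "\<dots> \<le> (\<Sum>b\<in>{1..r}. if t + b \<le> r then ((2*s*b) choose (t+b)) * ((card Y - (t+b)) choose (r - (t+b))) else 0)"
  proof (rule sum_mono)
    fix b assume "b \<in> {1..r}"
    show "card {B \<in> ksubsets Y r. t + b \<le> card (B \<inter> P b)} \<le> (if t + b \<le> r then ((2*s*b) choose (t+b)) * ((card Y - (t+b)) choose (r - (t+b))) else 0)"
    proof (cases "t + b \<le> r")
      case True
      have "card {B \<in> ksubsets Y r. t + b \<le> card (B \<inter> P b)} \<le> (card (P b) choose (t+b)) * ((card Y - (t+b)) choose (r - (t+b)))"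
        by (rule count_ge) (use fY True in \<open>auto simp: P_def\<close>)
      also have "\<dots> \<le> ((2*s*b) choose (t+b)) * ((card Y - (t+b)) choose (r - (t+b)))"
      proof (intro mult_right_mono binomial_right_mono)
        have "card (P b) \<le> card {lo..<lo + 2*s*b}" unfolding P_def by (intro card_mono) auto
        then show "card (P b) \<le> 2*s*b" by simp
      qed simp
      finally show ?thesis using True by simp
    next
      case False
      have "{B \<in> ksubsets Y r. t + b \<le> card (B \<inter> P b)} = {}"
      proof -
        have "card (B \<inter> P b) \<le> r" if "B \<in> ksubsets Y r" for B
        proof -
          have "B \<subseteq> Y" "card B = r" using that unfolding ksubsets_def by auto
          then have "finite B" using fY finite_subset by auto
          then have "card (B \<inter> P b) \<le> card B" by (intro card_mono) auto
          then show ?thesis using \<open>card B = r\<close> by simp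
        qed
        then show ?thesis using False by (force simp: not_le)
      qed
      then have "card {B \<in> ksubsets Y r. t + b \<le> card (B \<inter> P b)} = 0" by (simp only: card.empty)
      then show ?thesis using False by simp
    qed
  qed
  finally show ?thesis unfolding Y_def .
qed



lemma num_facts:
  fixes s r :: nat and m :: real
  assumes s: "s \<ge> 1" and hm: "m \<ge> 3 * exp 1 * real (s+1) * real (r+1) - real (s+1)"
  shows "real (s+1) * real r \<le> m" "exp 1 * real (s+1) * real r \<le> (2/5) * (m - 2*real (r+1))"
    "6 * real s * real r + 2 * real r + 3 \<le> m" "exp 1 * real (2*s) * real r \<le> (2/3) * m"
proof -
  define E where "E = exp (1::real)"
  have E2: "E \<ge> 2" unfolding E_def using exp_ge_add_one_self[of 1] by simp
  define S where "S = real s"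
  define R where "R = real r"
  have S1: "S \<ge> 1" unfolding S_def using s by simp
  have R0: "R \<ge> 0" unfolding R_def by simp
  define A where "A = E*(S+1)*(R+1)"
  define ESR where "ESR = E*S*R"
  define ER where "ER = E*R"
  define ES where "ES = E*S"
  define SR where "SR = S*R"
  have "3*A - (S+1) = 3 * exp 1 * real (s+1) * real (r+1) - real (s+1)"
    unfolding A_def E_def S_def R_def by (simp add: algebra_simps)
  then have hm': "m \<ge> 3*A - (S+1)" using hm by argo
  have A: "A = ESR + ER + ES + E" unfolding A_def ESR_def ER_def ES_def by (simp add: algebra_simps)
  have p1: "A \<ge> 2*(SR + S + R + 1)"
  proof -
    have "E*((S+1)*(R+1)) \<ge> 2*((S+1)*(R+1))" using E2 S1 R0 by (intro mult_right_mono) auto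
    then show ?thesis unfolding A_def SR_def by (simp add: algebra_simps)
  qed
  have p3: "ESR + ER \<ge> 2*SR + 2*R"
  proof -
    have "E*((S+1)*R) \<ge> 2*((S+1)*R)" using E2 S1 R0 by (intro mult_right_mono) auto
    then show ?thesis unfolding ESR_def ER_def SR_def by (simp add: algebra_simps)
  qed
  have p5: "ES + E \<ge> 2*S + 2"
  proof -
    have "E*(S+1) \<ge> 2*(S+1)" using E2 S1 by (intro mult_right_mono) auto
    then show ?thesis unfolding ES_def by (simp add: algebra_simps)
  qed
  have p6: "SR \<ge> R" unfolding SR_def using mult_right_mono[of 1 S R] S1 R0 by simp
  have p10: "ER \<ge> 0" unfolding ER_def using E2 R0 by simp
  have p13: "ES \<ge> 2*S" unfolding ES_def using E2 S1 by (intro mult_right_mono) auto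
  have c1: "SR + R \<le> m" using hm' p1 p6 S1 R0 by argo
  have c2: "ESR + ER \<le> (2/5) * (m - 2*(R+1))" using hm' A p3 p5 p6 S1 R0 by argo
  have c3: "6*SR + 2*R + 3 \<le> m" using hm' p1 S1 R0 by argo
  have c4: "2*ESR \<le> (2/3)*m" using hm' A p10 p13 E2 S1 R0 by argo
  show "real (s+1) * real r \<le> m" using c1 unfolding SR_def S_def R_def by (simp add: algebra_simps)
  show "exp 1 * real (s+1) * real r \<le> (2/5) * (m - 2*real (r+1))"
    using c2 unfolding ESR_def ER_def E_def S_def R_def by (simp add: algebra_simps)
  show "6 * real s * real r + 2 * real r + 3 \<le> m" using c3 unfolding SR_def S_def R_def by (simp add: algebra_simps)
  show "exp 1 * real (2*s) * real r \<le> (2/3) * m"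
    using c4 unfolding ESR_def E_def S_def R_def by (simp add: algebra_simps)
qed

lemma pow43: "n \<ge> 40 \<Longrightarrow> (4/3::real) ^ n > 90 * real n"
proof (induction n rule: dec_induct)
  case base
  have "(90::real) * 40 * 3^40 < 4^40" by simp
  then show ?case by (simp add: power_divide field_simps)
next
  case (step n)
  have "(4/3::real) ^ Suc n = (4/3) * (4/3)^n" by simp
  also have "\<dots> > (4/3) * (90 * real n)" using step by simp
  finally show ?case using step by simp
qed

lemma dense_empty: "s \<ge> 1 \<Longrightarrow> dense lo n s r (r+1) = {}"
proof -
  assume s: "s \<ge> 1"
  have "\<not> (2*s*(r+1) + (x + 1 - lo) \<le> 2*s*card (B \<inter> {lo..x}))" if "B \<in> ksubsets {lo..n} r" for B x
  proof -
    have "finite B" "card B = r" using that finite_subset unfolding ksubsets_def by auto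
    then have "card (B \<inter> {lo..x}) \<le> r" by (metis card_mono inf_le1)
    then have "2*s*card (B \<inter> {lo..x}) \<le> 2*s*r" by simp
    moreover have "2*s*r < 2*s*(r+1)" using s by simp
    ultimately show ?thesis by linarith
  qed
  then show ?thesis unfolding dense_def by blast
qed

lemma main_choice:
  fixes lo n s r :: nat and \<Phi> :: "nat set set" and K :: real
  assumes s: "s \<ge> 40" and r: "r \<ge> 1"
    and \<Phi>: "\<Phi> \<subseteq> ksubsets {lo..n} r" "\<Phi> \<noteq> {}"
    and hm: "real (card {lo..n}) \<ge> 3 * exp 1 * real (s+1) * real (r+1) - real (s+1)"
    and hf: "real (card \<Phi>) < real (card {lo..n} choose r) / real s ^ 4"
    and K: "0 \<le> K" "K \<le> 10 * real (s+1)"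
  shows "\<exists>B\<in>\<Phi>. \<forall>j<s. rr lo B s r j \<subseteq> {lo..n} \<and> card (rr lo B s r j) = r \<and> rr lo B s r j \<inter> B = {}
            \<and> (\<forall>j'<s. j \<noteq> j' \<longrightarrow> rr lo B s r j \<inter> rr lo B s r j' = {})
            \<and> K * real (card \<Phi>) < real (card {G \<in> ksubsets {lo..n} r. domi G (rr lo B s r j)})"
proof -
  have s1: "s \<ge> 1" using s by simp
  define m where "m = card {lo..n}"
  note nf = num_facts[OF s1 hm]
  define t0 where "t0 = (LEAST t. \<not> \<Phi> \<subseteq> dense lo n s r t)"
  have ex: "\<not> \<Phi> \<subseteq> dense lo n s r (r+1)" using dense_empty[OF s1] \<Phi>(2) by simp
  have t0: "\<not> \<Phi> \<subseteq> dense lo n s r t0" unfolding t0_def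
    by (rule LeastI_ex[where P="\<lambda>t. \<not> \<Phi> \<subseteq> dense lo n s r t"]) (use ex in blast)
  have t0le: "t0 \<le> r + 1" unfolding t0_def by (rule Least_le[where P="\<lambda>t. \<not> \<Phi> \<subseteq> dense lo n s r t"]) (rule ex)
  obtain B where B: "B \<in> \<Phi>" "B \<notin> dense lo n s r t0" using t0 by blast
  have BY: "B \<subseteq> {lo..n}" "card B = r" using B \<Phi> unfolding ksubsets_def by auto
  have finB: "finite B" using BY finite_subset by auto
  have nd: "\<forall>x\<in>{lo..n}. \<not> (2*s*t0 + (x + 1 - lo) \<le> 2*s*card (B \<inter> {lo..x}))"
    using B(2) B(1) \<Phi>(1) unfolding dense_def by auto
  have mreal: "real m = real (card {lo..n})" unfolding m_def by simp
  have room0: "(s+1)*r \<le> m" using nf(1) unfolding m_def by (simp only: of_nat_mult[symmetric] of_nat_le_iff)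
  have mr: "6*s*r + 2*r + 3 \<le> m"
  proof -
    have "real (6*s*r + 2*r + 3) \<le> real m" using nf(3) unfolding m_def by simp
    then show ?thesis by (simp only: of_nat_le_iff)
  qed
  have m_eq: "m = Suc n - lo" unfolding m_def by simp
  have room: "lo + s*r + r \<le> Suc n" using room0 m_eq mr by (simp add: algebra_simps)
  define m' where "m' = card {lo + 2*t0..n}"
  have m'_eq: "m' + 2*t0 = m" unfolding m'_def m_eq using mr m_eq t0le by simp
  have m'pos: "m' > 0" using m'_eq mr t0le by simp
  have sr_m': "6*s*r \<le> m'" using m'_eq mr t0le by simp
  have "1*r \<le> (6*s)*r" by (rule mult_le_mono1) (use s1 in simp)
  then have rm': "r \<le> m'" using sr_m' by (simp only: mult_1 mult.assoc)
  have em': "exp 1 * real (s+1) * real r \<le> (2/5) * real m'"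
  proof -
    have "real m - 2*real (r+1) \<le> real m'" using m'_eq t0le by simp
    then show ?thesis using nf(2) unfolding mreal[symmetric] by simp
  qed
  define C where "C = real (m choose r)"
  have Cpos: "C > 0" unfolding C_def using room0 r by simp
  have ratio: "(1 - real r / real m') ^ (2*t0) * C \<le> real (m' choose r)"
    using R4[OF rm' m'pos, of "2*t0"] unfolding C_def m'_eq[symmetric] by simp
  have rr6: "real r / real m' \<le> 1 / (6 * real s)"
  proof -
    have "real (6*s*r) \<le> real m'" using sr_m' by (simp only: of_nat_le_iff)
    then show ?thesis using m'pos s1 by (simp add: field_simps)
  qed
  have base: "(1 - 1/(6*real s)) ^ (2*t0) * C \<le> real (m' choose r)"
  proof -
    have "(1 - 1/(6*real s)) ^ (2*t0) \<le> (1 - real r / real m') ^ (2*t0)"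
      using rr6 s1 by (intro power_mono) (auto simp: field_simps)
    then show ?thesis using ratio Cpos by (meson mult_right_mono less_imp_le order_trans)
  qed
  have bigU: "\<And>j. j < s \<Longrightarrow> real (card {G \<in> ksubsets {lo..n} r. domi G (rr lo B s r j)}) \<ge> (1/3) * real (m' choose r)"
  proof -
    fix j assume j: "j < s"
    have "real (card {G \<in> ksubsets {lo + 2*t0..n} r. domi G (rr lo B s r j)})
        \<ge> real (m' choose r) - (\<Sum>i<r. real (((s+1)*Suc i) choose Suc i) * real ((m' - Suc i) choose (r - Suc i)))"
      using up_lower[OF finB s1 BY(2) room j nd] unfolding m'_def .
    moreover have "(\<Sum>i<r. real (((s+1)*Suc i) choose Suc i) * real ((m' - Suc i) choose (r - Suc i))) \<le> (2/3) * real (m' choose r)"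
      by (rule sum_bound1[OF em' rm' m'pos])
    moreover have "card {G \<in> ksubsets {lo + 2*t0..n} r. domi G (rr lo B s r j)} \<le> card {G \<in> ksubsets {lo..n} r. domi G (rr lo B s r j)}"
      by (intro card_mono) (auto simp: ksubsets_def)
    moreover have "real (card {G \<in> ksubsets {lo + 2*t0..n} r. domi G (rr lo B s r j)}) \<le> real (card {G \<in> ksubsets {lo..n} r. domi G (rr lo B s r j)})"
      using calculation(3) by (simp only: of_nat_le_iff)
    ultimately show "real (card {G \<in> ksubsets {lo..n} r. domi G (rr lo B s r j)}) \<ge> (1/3) * real (m' choose r)"
      by linarith
  qed
  have main: "K * real (card \<Phi>) < (1/3) * (1 - 1/(6*real s)) ^ (2*t0) * C"
  proof (cases "t0 \<le> s")
    case True
    have "(1 - 1/(6*real s)) ^ (2*s) \<ge> 1 + real (2*s) * (- 1/(6*real s))"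
      using Bernoulli_inequality[of "- 1/(6*real s)" "2*s"] s1 by (simp add: field_simps)
    then have b1: "(1 - 1/(6*real s)) ^ (2*s) \<ge> 2/3" using s1 by (simp add: field_simps)
    have "(1 - 1/(6*real s)) ^ (2*t0) \<ge> (1 - 1/(6*real s)) ^ (2*s)"
      using True s1 by (intro power_decreasing) (auto simp: field_simps)
    then have b2: "(1 - 1/(6*real s)) ^ (2*t0) \<ge> 2/3" using b1 by linarith
    have "K * real (card \<Phi>) \<le> 10 * real (s+1) * real (card \<Phi>)" using K by (intro mult_right_mono) auto
    also have "\<dots> < 10 * real (s+1) * (C / real s ^ 4)" using hf unfolding C_def m_def by (intro mult_strict_left_mono) auto
    also have "\<dots> \<le> (2/9) * C"
    proof -
      have "real s ^ 4 \<ge> 45 * real (s+1)"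
      proof -
        have s40: "real s \<ge> 40" using s by simp
        have "real s ^ 4 = (real s * real s * real s) * real s" by (simp add: power4_eq_xxxx)
        moreover have a: "real s * real s \<ge> 40 * 40" using s40 by (intro mult_mono) auto
        have "real s * real s * real s \<ge> (40 * 40) * 40" using a s40 by (intro mult_mono) auto
        then have "real s * real s * real s \<ge> 90" by simp
        then have "(real s * real s * real s) * real s \<ge> 90 * real s" using s40 by (intro mult_right_mono) auto
        moreover have "45 * real (s+1) = 45 * real s + 45" by simp
        ultimately show ?thesis using s40 by linarith
      qed
      then have "10 * real (s+1) / real s ^ 4 \<le> 2/9" using s1 by (simp add: divide_le_eq)
      then have "(10 * real (s+1) / real s ^ 4) * C \<le> (2/9) * C" using Cpos by (intro mult_right_mono) auto
      then show ?thesis by simp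
    qed
    also have "\<dots> \<le> (1/3) * (1 - 1/(6*real s)) ^ (2*t0) * C" using b2 Cpos by (simp add: field_simps)
    finally show ?thesis .
  next
    case False
    then have t1: "t0 \<ge> s + 1" by simp
    have "\<Phi> \<subseteq> dense lo n s r (t0 - 1)"
      using not_less_Least[of "t0 - 1" "\<lambda>t. \<not> \<Phi> \<subseteq> dense lo n s r t"] t1 unfolding t0_def by simp
    then have "card \<Phi> \<le> card (dense lo n s r (t0 - 1))" by (intro card_mono) (auto simp: dense_def)
    also have "\<dots> \<le> (\<Sum>b\<in>{1..r}. if t0 - 1 + b \<le> r then ((2*s*b) choose (t0 - 1 + b)) * ((m - (t0 - 1 + b)) choose (r - (t0 - 1 + b))) else 0)"
      using dense_card[OF s1] unfolding m_def .
    finally have "real (card \<Phi>) \<le> real (\<Sum>b\<in>{1..r}. if t0 - 1 + b \<le> r then ((2*s*b) choose (t0 - 1 + b)) * ((m - (t0 - 1 + b)) choose (r - (t0 - 1 + b))) else 0)"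
      by (simp only: of_nat_le_iff)
    also have "\<dots> = (\<Sum>b\<in>{1..r}. if t0 - 1 + b \<le> r then real ((2*s*b) choose (t0 - 1 + b)) * real ((m - (t0 - 1 + b)) choose (r - (t0 - 1 + b))) else 0)"
      unfolding of_nat_sum by (intro sum.cong) auto
    also have "\<dots> \<le> 2 * (2/3) ^ (t0 - 1) * C"
    proof -
      have e2: "exp 1 * real (2*s) * real r \<le> (2/3) * real m" using nf(4) mreal by simp
      have "r \<le> (s+1)*r" by simp
      then have rm: "r \<le> m" using room0 by linarith
      have m0: "0 < m" using rm r by simp
      show ?thesis unfolding C_def by (rule sum_bound2[OF e2 rm m0])
    qed
    finally have f1: "real (card \<Phi>) \<le> 3 * (2/3) ^ t0 * C"
      using t1 by (cases t0) (auto simp: field_simps)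
    have x17: "1 - 1/(6*real s) \<ge> 17/18" using s by (simp add: field_simps)
    have "(17/18::real) ^ 2 \<le> (1 - 1/(6*real s)) ^ 2" by (rule power_mono[OF x17]) simp
    then have "(1 - 1/(6*real s)) ^ 2 \<ge> 8/9" by (simp add: power2_eq_square)
    then have q1: "(1 - 1/(6*real s)) ^ (2*t0) \<ge> (8/9) ^ t0"
      by (simp add: power_mult power_mono)
    have q2: "(4/3::real) ^ t0 > 90 * real (s+1)"
    proof -
      have "(4/3::real) ^ (s+1) > 90 * real (s+1)" using pow43[of "s+1"] s by simp
      moreover have "(4/3::real) ^ (s+1) \<le> (4/3) ^ t0" using t1 by (intro power_increasing) auto
      ultimately show ?thesis by linarith
    qed
    have "K * real (card \<Phi>) \<le> 10 * real (s+1) * (3 * (2/3) ^ t0 * C)"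
      using K f1 by (intro mult_mono) auto
    also have "\<dots> = (1/3) * (90 * real (s+1)) * ((2/3) ^ t0 * C)" by simp
    also have "\<dots> < (1/3) * ((4/3) ^ t0) * ((2/3) ^ t0 * C)"
      using q2 Cpos by (intro mult_strict_right_mono mult_strict_left_mono) auto
    also have "\<dots> = (1/3) * (8/9) ^ t0 * C" by (simp add: power_mult_distrib[symmetric])
    also have "\<dots> \<le> (1/3) * (1 - 1/(6*real s)) ^ (2*t0) * C" using q1 Cpos by (intro mult_right_mono) auto
    finally show ?thesis .
  qed
  have fin: "\<forall>j<s. rr lo B s r j \<subseteq> {lo..n} \<and> card (rr lo B s r j) = r \<and> rr lo B s r j \<inter> B = {}
            \<and> (\<forall>j'<s. j \<noteq> j' \<longrightarrow> rr lo B s r j \<inter> rr lo B s r j' = {})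
            \<and> K * real (card \<Phi>) < real (card {G \<in> ksubsets {lo..n} r. domi G (rr lo B s r j)})"
  proof (intro allI impI)
    fix j assume j: "j < s"
    have a: "rr lo B s r j \<subseteq> {lo..n}" by (rule rr_sub[OF finB s1 j BY(2) room])
    have b: "card (rr lo B s r j) = r" by (rule rr_card[OF finB s1 j])
    have c: "rr lo B s r j \<inter> B = {}" by (rule rr_disj_B[OF finB s1])
    have d: "\<forall>j'<s. j \<noteq> j' \<longrightarrow> rr lo B s r j \<inter> rr lo B s r j' = {}" using rr_disj[OF finB s1 j] by blast
    have "(1/3) * (1 - 1/(6*real s)) ^ (2*t0) * C \<le> (1/3) * real (m' choose r)" using base by simp
    then have e: "K * real (card \<Phi>) < real (card {G \<in> ksubsets {lo..n} r. domi G (rr lo B s r j)})"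
      using main bigU[OF j] by linarith
    show "rr lo B s r j \<subseteq> {lo..n} \<and> card (rr lo B s r j) = r \<and> rr lo B s r j \<inter> B = {}
            \<and> (\<forall>j'<s. j \<noteq> j' \<longrightarrow> rr lo B s r j \<inter> rr lo B s r j' = {})
            \<and> K * real (card \<Phi>) < real (card {G \<in> ksubsets {lo..n} r. domi G (rr lo B s r j)})"
      using a b c d e by blast
  qed
  then show ?thesis using B(1) by blast
qed


lemma aux_range: "x \<in> {1..n} \<Longrightarrow> x \<notin> {1..s} \<Longrightarrow> x \<in> {s+1..(n::nat)}" by auto

lemma card_famA: "card (famA n k s) = (n choose k) - ((n - s) choose k)"
proof -
  have split: "ksubsets {1..n} k = famA n k s \<union> ksubsets {s+1..n} k"
  proof (intro equalityI subsetI)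
    fix F assume F: "F \<in> ksubsets {1..n} k"
    show "F \<in> famA n k s \<union> ksubsets {s+1..n} k"
    proof (cases "F \<inter> {1..s} = {}")
      case True
      then have "F \<subseteq> {s+1..n}" using F aux_range unfolding ksubsets_def by blast
      then show ?thesis using F unfolding ksubsets_def by auto
    next
      case False then show ?thesis using F unfolding famA_def by auto
    qed
  next
    fix F assume "F \<in> famA n k s \<union> ksubsets {s+1..n} k"
    then show "F \<in> ksubsets {1..n} k" unfolding famA_def ksubsets_def by auto
  qed
  have disj: "famA n k s \<inter> ksubsets {s+1..n} k = {}" unfolding famA_def ksubsets_def by auto
  have fA: "finite (famA n k s)" by (rule finite_subset[of _ "ksubsets {1..n} k"]) (auto simp: famA_def)
  have "card (ksubsets {1..n} k) = card (famA n k s) + card (ksubsets {s+1..n} k)"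
    unfolding split by (rule card_Un_disjoint[OF fA _ disj]) simp
  then show ?thesis by (simp add: card_ksubsets)
qed

lemma restr_eq:
  assumes "G \<subseteq> ksubsets {1..n} k" "k \<ge> 1"
  shows "restr s G (s+1) = {R \<in> ksubsets {s+2..n} (k-1). insert (s+1) R \<in> G}"
proof (intro equalityI subsetI)
  fix R assume "R \<in> restr s G (s+1)"
  then obtain H where H: "H \<in> G" "H \<inter> {1..s+1} = {s+1}" "R = H - {s+1}" unfolding restr_def by blast
  have Hk: "H \<subseteq> {1..n}" "card H = k" using H(1) assms(1) unfolding ksubsets_def by auto
  have sH: "s+1 \<in> H" using H(2) by blast
  have RY: "R \<subseteq> {s+2..n}"
  proof
    fix x assume "x \<in> R"
    then have x: "x \<in> H" "x \<noteq> s+1" using H(3) by auto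
    then have "x \<notin> {1..s+1}" using H(2) by blast
    then show "x \<in> {s+2..n}" using x Hk(1) by auto
  qed
  have fH: "finite H" using Hk(1) finite_subset by blast
  have cR: "card R = k - 1" using Hk(2) sH fH H(3) by simp
  have iR: "insert (s+1) R = H" using H(3) sH by blast
  show "R \<in> {R \<in> ksubsets {s+2..n} (k-1). insert (s+1) R \<in> G}" using H(1) RY cR iR unfolding ksubsets_def by simp
next
  fix R assume "R \<in> {R \<in> ksubsets {s+2..n} (k-1). insert (s+1) R \<in> G}"
  then have R: "R \<subseteq> {s+2..n}" "insert (s+1) R \<in> G" unfolding ksubsets_def by auto
  have a: "insert (s+1) R \<inter> {1..s+1} = {s+1}" using R(1) by auto
  have b: "R = insert (s+1) R - {s+1}" using R(1) by auto
  show "R \<in> restr s G (s+1)" unfolding restr_def using R(2) a b by blast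
qed


lemma diff_card_bound:
  fixes n k s :: nat and G :: "nat set set"
  assumes G: "G \<subseteq> ksubsets {1..n} k" "shifted n G" and k: "k \<ge> 1" and sn: "s + 1 \<le> n"
  defines "\<Phi> \<equiv> {R \<in> ksubsets {s+2..n} (k-1). insert (s+1) R \<in> G}"
  shows "real k * real (card (G - famA n k s)) \<le> (real k + real (n - s - 1)) * real (card \<Phi>)"
proof -
  define Y where "Y = {s+2..n}"
  define N where "N = n - s - 1"
  define D where "D = G - famA n k s"
  define S where "S = {H \<in> D. s+1 \<in> H}"
  define E where "E = {H \<in> D. s+1 \<notin> H}"
  have finG: "finite G" using G(1) by (rule finite_subset) simp
  have finPhi: "finite \<Phi>" unfolding \<Phi>_def by (rule finite_subset[of _ "ksubsets {s+2..n} (k-1)"]) auto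
  have Dchar: "\<And>H. H \<in> D \<Longrightarrow> H \<in> G \<and> H \<subseteq> {s+1..n} \<and> card H = k"
  proof -
    fix H assume "H \<in> D"
    then have "H \<in> G" "H \<inter> {1..s} = {}" unfolding D_def famA_def using G(1) by auto
    moreover have "H \<subseteq> {1..n}" "card H = k" using \<open>H \<in> G\<close> G(1) unfolding ksubsets_def by auto
    moreover have "H \<subseteq> {s+1..n}" using calculation aux_range by blast
    ultimately show "H \<in> G \<and> H \<subseteq> {s+1..n} \<and> card H = k" by blast
  qed
  have finD: "finite D" unfolding D_def using finG by simp
  have DSE: "D = S \<union> E" "S \<inter> E = {}" unfolding S_def E_def by auto
  have S_img: "S = insert (s+1) ` \<Phi>"
  proof (intro equalityI subsetI)
    fix H assume H: "H \<in> S"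
    then have H1: "H \<in> G" "H \<subseteq> {s+1..n}" "card H = k" "s+1 \<in> H" using Dchar unfolding S_def by auto
    have a1: "H - {s+1} \<subseteq> {s+2..n}" using H1(2) by auto
    have fH: "finite H" using H1(2) finite_subset by blast
    have a2: "card (H - {s+1}) = k - 1" using H1(3,4) fH by simp
    have a3: "insert (s+1) (H - {s+1}) = H" using H1(4) by blast
    have "H - {s+1} \<in> \<Phi>" unfolding \<Phi>_def ksubsets_def using a1 a2 a3 H1(1) by simp
    moreover have "H = insert (s+1) (H - {s+1})" using H1 by auto
    ultimately show "H \<in> insert (s+1) ` \<Phi>" by blast
  next
    fix H assume "H \<in> insert (s+1) ` \<Phi>"
    then obtain R where R: "R \<in> \<Phi>" "H = insert (s+1) R" by auto
    then have "R \<subseteq> {s+2..n}" "insert (s+1) R \<in> G" unfolding \<Phi>_def ksubsets_def by auto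
    then have "H \<in> G" "H \<inter> {1..s} = {}" "s+1 \<in> H" using R by auto
    then show "H \<in> S" unfolding S_def D_def famA_def by auto
  qed
  have cS: "card S = card \<Phi>"
  proof -
    have "inj_on (insert (s+1)) \<Phi>"
    proof (rule inj_onI)
      fix x y assume x: "x \<in> \<Phi>" and y: "y \<in> \<Phi>" and e: "insert (s+1) x = insert (s+1) y"
      have "s+1 \<notin> x" "s+1 \<notin> y" using x y unfolding \<Phi>_def ksubsets_def by auto
      then have "x = insert (s+1) x - {s+1}" "y = insert (s+1) y - {s+1}" by auto
      then show "x = y" using e by metis
    qed
    then show ?thesis unfolding S_img by (rule card_image)
  qed
  define P where "P = Sigma E (\<lambda>H. H)"
  have finE: "finite E" unfolding E_def using finD by simp
  have cP: "card P = k * card E"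
  proof -
    have finH: "\<forall>a\<in>E. finite a"
    proof
      fix a assume "a \<in> E"
      then have "a \<subseteq> {s+1..n}" using Dchar unfolding E_def by blast
      then show "finite a" using finite_subset by blast
    qed
    have "card P = (\<Sum>H\<in>E. card H)" unfolding P_def by (rule card_SigmaI[OF finE finH])
    also have "\<dots> = (\<Sum>H\<in>E. k)" using Dchar unfolding E_def by (intro sum.cong) auto
    finally show ?thesis by simp
  qed
  have Pmap: "(\<lambda>(H, z). (H - {z}, z)) ` P \<subseteq> \<Phi> \<times> Y"
  proof
    fix q assume "q \<in> (\<lambda>(H, z). (H - {z}, z)) ` P"
    then obtain H z where Hz: "H \<in> E" "z \<in> H" "q = (H - {z}, z)" unfolding P_def by auto
    have H1: "H \<in> G" "H \<subseteq> {s+1..n}" "card H = k" "s+1 \<notin> H" using Hz Dchar unfolding E_def by auto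
    have HY: "H \<subseteq> Y"
    proof
      fix x assume "x \<in> H"
      then have "x \<in> {s+1..n}" "x \<noteq> s+1" using H1 by auto
      then show "x \<in> Y" unfolding Y_def by auto
    qed
    have z: "z \<in> Y" using HY Hz by auto
    have "insert (s+1) (H - {z}) \<in> G"
      by (rule single_shift[OF G(2) H1(1) Hz(2) H1(4)]) (use sn z Y_def in auto)
    moreover have "H - {z} \<subseteq> {s+2..n}" using HY unfolding Y_def by auto
    moreover have "card (H - {z}) = k - 1" using H1 Hz finite_subset[OF H1(2)] by simp
    ultimately show "q \<in> \<Phi> \<times> Y" unfolding \<Phi>_def ksubsets_def using Hz z by auto
  qed
  have injP: "inj_on (\<lambda>(H, z). (H - {z}, z)) P"
  proof (rule inj_onI)
    fix a b assume a: "a \<in> P" and b: "b \<in> P" and eq: "(\<lambda>(H, z). (H - {z}, z)) a = (\<lambda>(H, z). (H - {z}, z)) b"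
    obtain H z where A: "a = (H, z)" "z \<in> H" using a unfolding P_def by auto
    obtain H' z' where B: "b = (H', z')" "z' \<in> H'" using b unfolding P_def by auto
    have e1: "H - {z} = H' - {z'}" and e2: "z = z'" using eq A(1) B(1) by auto
    have "H = insert z (H - {z})" using A(2) by auto
    also have "\<dots> = insert z' (H' - {z'})" using e1 e2 by simp
    also have "\<dots> = H'" using B(2) by auto
    finally show "a = b" using A(1) B(1) e2 by simp
  qed
  have "k * card E \<le> card \<Phi> * card Y"
  proof -
    have "card P = card ((\<lambda>(H, z). (H - {z}, z)) ` P)" using card_image[OF injP] by simp
    also have "\<dots> \<le> card (\<Phi> \<times> Y)" by (rule card_mono[OF _ Pmap]) (simp add: finPhi Y_def)
    finally show ?thesis using cP by (simp add: card_cartesian_product)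
  qed
  moreover have "card Y = N" unfolding Y_def N_def by simp
  moreover have "card D = card S + card E" using DSE finD by (simp add: card_Un_disjoint)
  ultimately have "k * card D \<le> k * card \<Phi> + card \<Phi> * N" using cS by (simp only:) (simp add: algebra_simps)
  then have "real (k * card D) \<le> real (k * card \<Phi> + card \<Phi> * N)" by (simp only: of_nat_le_iff)
  then have "real k * real (card D) \<le> real k * real (card \<Phi>) + real (card \<Phi>) * real N" by (simp only: of_nat_mult of_nat_add)
  moreover have "(real k + real N) * real (card \<Phi>) = real k * real (card \<Phi>) + real (card \<Phi>) * real N" by (simp add: algebra_simps)
  ultimately have "real k * real (card D) \<le> (real k + real N) * real (card \<Phi>)" by linarith
  then show ?thesis unfolding D_def N_def .
qed


lemma card_split_diff: "finite X \<Longrightarrow> card X = card (X \<inter> Y) + card (X - Y)"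
proof -
  assume f: "finite X"
  have "X = (X \<inter> Y) \<union> (X - Y)" by auto
  then show ?thesis using f by (metis card_Un_disjoint finite_Diff finite_Int Diff_disjoint Int_Diff_disjoint)
qed

theorem lemma1:
  fixes s k n :: nat and F :: "nat \<Rightarrow> nat set set"
  assumes "k > 0" and "s > 2 * 10^6"
    and "n = nat \<lceil>3 * exp 1 * real (s + 1) * real k\<rceil>"
    and "\<forall>i\<in>{1..s+1}. F i \<subseteq> ksubsets {1..n} k"
    and "\<forall>i\<in>{1..s+1}. shifted n (F i)"
    and "cross_dependent s F"
    and "\<forall>i\<in>{1..s+1}. real (card (restr s (F i) (s+1)))
            < (1 / real s ^ 4) * real ((n - s - 1) choose (k - 1))"
    and "\<exists>i\<in>{1..s+1}. F i \<noteq> famA n k s"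
  shows "Min ((\<lambda>i. card (F i)) ` {1..s+1}) < (n choose k) - ((n - s) choose k)"
proof (rule ccontr)
  assume neg: "\<not> ?thesis"
  note k0 = assms(1) and sbig = assms(2) and ndef = assms(3) and Fsub = assms(4) and Fsh = assms(5)
    and cd = assms(6) and hrestr = assms(7) and hne = assms(8)
  define A where "A = famA n k s"
  define Ix where "Ix = {1..s+1}"
  define r where "r = k - 1"
  define Y where "Y = {s+2..n}"
  define \<Phi> where "\<Phi> = (\<lambda>i. {R \<in> ksubsets Y r. insert (s+1) R \<in> F i})"
  define m where "m = n - s - 1"
  define x where "x = 3 * exp 1 * real (s + 1) * real k"
  have s40: "s \<ge> 40" using sbig by simp
  have s1: "s \<ge> 1" using s40 by simp
  have e2: "exp (1::real) \<ge> 2" using exp_ge_add_one_self[of 1] by simp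
  have e3: "exp (1::real) \<le> 3" by (rule exp_le)
  have xpos: "x \<ge> 0" unfolding x_def by simp
  have nx: "real n \<ge> x" "real n \<le> x + 1"
  proof -
    have "real n = real_of_int \<lceil>x\<rceil>" unfolding ndef x_def[symmetric] using xpos by simp
    then show "real n \<ge> x" "real n \<le> x + 1" by (simp_all add: le_of_int_ceiling of_int_ceiling_le_add_one)
  qed
  have x6: "x \<ge> 6 * real (s+1)"
  proof -
    have "3 * exp 1 * real (s+1) * real k \<ge> 3 * 2 * real (s+1) * 1"
      using e2 k0 by (intro mult_mono) auto
    then show ?thesis unfolding x_def by simp
  qed
  have ns: "s + 2 \<le> n"
  proof -
    have "real (s+2) \<le> real n" using nx(1) x6 by simp
    then show ?thesis by (simp only: of_nat_le_iff)
  qed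
  have cardA: "card A = (n choose k) - ((n - s) choose k)" unfolding A_def by (rule card_famA)
  have finA: "finite A" unfolding A_def famA_def by (rule finite_subset[of _ "ksubsets {1..n} k"]) auto
  have finF: "\<And>i. i \<in> Ix \<Longrightarrow> finite (F i)" using Fsub unfolding Ix_def
    by (meson finite_atLeastAtMost finite_ksubsets finite_subset)
  have geA: "\<And>i. i \<in> Ix \<Longrightarrow> card (F i) \<ge> card A"
  proof -
    fix i assume i: "i \<in> Ix"
    have "Min ((\<lambda>i. card (F i)) ` {1..s+1}) \<le> card (F i)" using i unfolding Ix_def by (intro Min_le) auto
    then show "card (F i) \<ge> card A" using neg cardA by linarith
  qed
  have diff: "\<And>i. i \<in> Ix \<Longrightarrow> card (A - F i) \<le> card (F i - A)"
  proof -
    fix i assume i: "i \<in> Ix"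
    have "card (F i) = card (F i \<inter> A) + card (F i - A)" using finF[OF i] by (rule card_split_diff)
    moreover have "card A = card (A \<inter> F i) + card (A - F i)" using finA by (rule card_split_diff)
    moreover have "card (F i \<inter> A) = card (A \<inter> F i)" by (simp add: Int_commute)
    ultimately show "card (A - F i) \<le> card (F i - A)" using geA[OF i] by linarith
  qed
  define K where "K = (real k + real m) / real k"
  have Kb: "\<And>i. i \<in> Ix \<Longrightarrow> real (card (F i - A)) \<le> K * real (card (\<Phi> i))"
  proof -
    fix i assume i: "i \<in> Ix"
    have "real k * real (card (F i - A)) \<le> (real k + real (n - s - 1)) * real (card (\<Phi> i))"
      unfolding A_def \<Phi>_def Y_def r_def
      by (rule diff_card_bound) (use Fsub Fsh i k0 ns Ix_def in auto)
    then show "real (card (F i - A)) \<le> K * real (card (\<Phi> i))"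
      unfolding K_def m_def using k0 by (simp add: field_simps)
  qed
  have finPhi: "\<And>i. finite (\<Phi> i)" unfolding \<Phi>_def Y_def by (rule finite_subset[of _ "ksubsets {s+2..n} r"]) auto
  have hPhi: "\<And>i. i \<in> Ix \<Longrightarrow> real (card (\<Phi> i)) < real (m choose r) / real s ^ 4"
  proof -
    fix i assume i: "i \<in> Ix"
    have "restr s (F i) (s+1) = \<Phi> i" unfolding \<Phi>_def Y_def r_def
      by (rule restr_eq) (use Fsub i k0 Ix_def in auto)
    moreover have "real (card (restr s (F i) (s+1))) < (1 / real s ^ 4) * real ((n - s - 1) choose (k - 1))"
      using hrestr i unfolding Ix_def by blast
    ultimately show "real (card (\<Phi> i)) < real (m choose r) / real s ^ 4"
      unfolding m_def r_def by simp
  qed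
  have emptyA: "\<And>i. i \<in> Ix \<Longrightarrow> \<Phi> i = {} \<Longrightarrow> F i = A"
  proof -
    fix i assume i: "i \<in> Ix" and e: "\<Phi> i = {}"
    have "real (card (F i - A)) \<le> 0" using Kb[OF i] e by simp
    then have "F i - A = {}" using finF[OF i] by simp
    then have "F i \<subseteq> A" by auto
    then show "F i = A" using geA[OF i] finA by (metis card_subset_eq le_antisym card_mono)
  qed
  obtain i0 where i0: "i0 \<in> Ix" "F i0 \<noteq> A" using hne unfolding Ix_def A_def by blast
  have Phi0: "\<Phi> i0 \<noteq> {}" using emptyA i0 by blast
  have r1: "r \<ge> 1"
  proof (rule ccontr)
    assume "\<not> r \<ge> 1"
    then have "r = 0" by simp
    then have "real (card (\<Phi> i0)) < 1 / real s ^ 4" using hPhi[OF i0(1)] by simp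
    also have "\<dots> \<le> 1" using s1 by simp
    finally have "card (\<Phi> i0) = 0" by simp
    then show False using Phi0 finPhi by simp
  qed
  have kr: "k = r + 1" unfolding r_def using k0 by simp
  obtain a where a: "a \<in> Ix" "\<forall>i\<in>Ix. card (\<Phi> i) \<le> card (\<Phi> a)"
  proof -
    have "Max ((\<lambda>i. card (\<Phi> i)) ` Ix) \<in> (\<lambda>i. card (\<Phi> i)) ` Ix" unfolding Ix_def by (intro Max_in) auto
    then obtain a where "a \<in> Ix" "card (\<Phi> a) = Max ((\<lambda>i. card (\<Phi> i)) ` Ix)" by auto
    moreover have "\<forall>i\<in>Ix. card (\<Phi> i) \<le> Max ((\<lambda>i. card (\<Phi> i)) ` Ix)" unfolding Ix_def by auto
    ultimately show ?thesis using that by auto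
  qed
  have Phia: "\<Phi> a \<noteq> {}"
  proof
    assume "\<Phi> a = {}"
    then have "card (\<Phi> i0) = 0" using a i0 by (metis card.empty le_zero_eq)
    then show False using Phi0 finPhi by simp
  qed
  have cardY: "card Y = m" unfolding Y_def m_def by simp
  have realm: "real m = real n - real s - 1" unfolding m_def using ns by (simp add: of_nat_diff)
  have K0: "0 \<le> K" unfolding K_def by simp
  have K10: "K \<le> 10 * real (s+1)"
  proof -
    have "real m \<le> x" using realm nx(2) by simp
    also have "x \<le> 9 * real (s+1) * real k" unfolding x_def using e3 by (intro mult_right_mono) auto
    finally have "real m \<le> 9 * real (s+1) * real k" .
    then have "real m / real k \<le> 9 * real (s+1)" using k0 by (simp add: divide_le_eq)
    moreover have "K = 1 + real m / real k" unfolding K_def using k0 by (simp add: field_simps)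
    ultimately show ?thesis by simp
  qed
  have hm: "real (card {s+2..n}) \<ge> 3 * exp 1 * real (s+1) * real (r+1) - real (s+1)"
    using cardY realm nx(1) unfolding Y_def x_def kr by simp
  have hf: "real (card (\<Phi> a)) < real (card {s+2..n} choose r) / real s ^ 4"
    using hPhi[OF a(1)] cardY unfolding Y_def by simp
  have PhiY: "\<Phi> a \<subseteq> ksubsets {s+2..n} r" unfolding \<Phi>_def Y_def by auto
  obtain B where B: "B \<in> \<Phi> a" and Rprop: "\<forall>j<s. rr (s+2) B s r j \<subseteq> {s+2..n} \<and> card (rr (s+2) B s r j) = r \<and> rr (s+2) B s r j \<inter> B = {}
            \<and> (\<forall>j'<s. j \<noteq> j' \<longrightarrow> rr (s+2) B s r j \<inter> rr (s+2) B s r j' = {})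
            \<and> K * real (card (\<Phi> a)) < real (card {G \<in> ksubsets {s+2..n} r. domi G (rr (s+2) B s r j)})"
    using main_choice[OF s40 r1 PhiY Phia hm hf K0 K10] by blast
  define pi where "pi = (\<lambda>i::nat. if i < a then i else i - 1)"
  define R where "R = (\<lambda>i. rr (s+2) B s r (pi i - 1))"
  define Gf where "Gf = (\<lambda>i. if i = a then insert (s+1) B else insert (pi i) (R i))"
  have BY: "B \<subseteq> Y" "insert (s+1) B \<in> F a" using B unfolding \<Phi>_def ksubsets_def by auto
  have pi_rng: "\<And>i. i \<in> Ix \<Longrightarrow> i \<noteq> a \<Longrightarrow> 1 \<le> pi i \<and> pi i \<le> s"
    using a(1) unfolding pi_def Ix_def by auto
  have pi_inj: "\<And>i i'. i \<in> Ix \<Longrightarrow> i' \<in> Ix \<Longrightarrow> i \<noteq> a \<Longrightarrow> i' \<noteq> a \<Longrightarrow> pi i = pi i' \<Longrightarrow> i = i'"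
    using a(1) unfolding pi_def Ix_def by (auto split: if_splits)
  have Rp: "\<And>i. i \<in> Ix \<Longrightarrow> i \<noteq> a \<Longrightarrow> R i \<subseteq> Y \<and> card (R i) = r \<and> R i \<inter> B = {}
      \<and> K * real (card (\<Phi> a)) < real (card {G \<in> ksubsets Y r. domi G (R i)})"
  proof -
    fix i assume i: "i \<in> Ix" "i \<noteq> a"
    have "pi i - 1 < s" using pi_rng[OF i] by linarith
    then show "R i \<subseteq> Y \<and> card (R i) = r \<and> R i \<inter> B = {} \<and> K * real (card (\<Phi> a)) < real (card {G \<in> ksubsets Y r. domi G (R i)})"
      using Rprop unfolding R_def Y_def by blast
  qed
  have Rdisj: "\<And>i i'. i \<in> Ix \<Longrightarrow> i' \<in> Ix \<Longrightarrow> i \<noteq> a \<Longrightarrow> i' \<noteq> a \<Longrightarrow> i \<noteq> i' \<Longrightarrow> R i \<inter> R i' = {}"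
  proof -
    fix i i' assume h: "i \<in> Ix" "i' \<in> Ix" "i \<noteq> a" "i' \<noteq> a" "i \<noteq> i'"
    have "pi i \<noteq> pi i'" using pi_inj h by blast
    then have "pi i - 1 \<noteq> pi i' - 1" using pi_rng[OF h(1,3)] pi_rng[OF h(2,4)] by auto
    moreover have "pi i - 1 < s" "pi i' - 1 < s" using pi_rng[OF h(1,3)] pi_rng[OF h(2,4)] by auto
    ultimately show "R i \<inter> R i' = {}" using Rprop unfolding R_def by blast
  qed
  have YN: "Y \<subseteq> {1..n}" unfolding Y_def by auto
  have mem: "\<forall>i\<in>Ix. Gf i \<in> F i"
  proof
    fix i assume i: "i \<in> Ix"
    show "Gf i \<in> F i"
    proof (cases "i = a")
      case True then show ?thesis using BY unfolding Gf_def by simp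
    next
      case False
      define xx where "xx = pi i"
      have xx: "1 \<le> xx" "xx \<le> s" using pi_rng[OF i False] unfolding xx_def by auto
      have RP: "R i \<subseteq> Y" "card (R i) = r" "K * real (card (\<Phi> a)) < real (card {G \<in> ksubsets Y r. domi G (R i)})"
        using Rp[OF i False] by auto
      have xR: "xx \<notin> R i" using RP(1) xx unfolding Y_def by auto
      have finR: "finite (R i)" using RP(1) unfolding Y_def using finite_subset by blast
      show ?thesis
      proof (rule ccontr)
        assume notin: "\<not> Gf i \<in> F i"
        then have notin': "insert xx (R i) \<notin> F i" unfolding Gf_def xx_def using False by simp
        define U where "U = {G \<in> ksubsets Y r. domi G (R i)}"
        have sub: "insert xx ` U \<subseteq> A - F i"
        proof
          fix H assume "H \<in> insert xx ` U"
          then obtain G where G: "G \<in> U" "H = insert xx G" by auto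
          have GY: "G \<subseteq> Y" "card G = r" "domi G (R i)" using G unfolding U_def ksubsets_def by auto
          have finG: "finite G" using GY(1) unfolding Y_def using finite_subset by blast
          have xG: "xx \<notin> G" using GY(1) xx unfolding Y_def by auto
          have "H \<notin> F i"
          proof
            assume HinF: "H \<in> F i"
            have "insert xx (R i) \<in> F i"
            proof -
            have HF: "insert xx G \<in> F i" using HinF G(2) by simp
            have sh: "shifted n (F i)" using Fsh i unfolding Ix_def by blast
            have RN: "R i \<subseteq> {1..n}" using RP(1) YN by blast
            have cGR: "card G = card (R i)" using GY(2) RP(2) by simp
            show "insert xx (R i) \<in> F i" by (rule dom_shift[OF sh RN xR finG finR cGR xG GY(3) HF])
            qed
            then show False using notin' by simp
          qed
          moreover have "H \<in> A"
          proof -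
            have "H \<subseteq> {1..n}" using G(2) GY(1) YN xx ns by auto
            moreover have "card H = k" using G(2) GY(2) xG finG kr by simp
            moreover have "H \<inter> {1..s} \<noteq> {}" using G(2) xx by auto
            ultimately show ?thesis unfolding A_def famA_def ksubsets_def by simp
          qed
          ultimately show "H \<in> A - F i" by simp
        qed
        have injx: "inj_on (insert xx) U"
        proof (rule inj_onI)
          fix G G' assume "G \<in> U" "G' \<in> U" "insert xx G = insert xx G'"
          moreover have "xx \<notin> G" "xx \<notin> G'" using calculation(1,2) xx unfolding U_def Y_def ksubsets_def by auto
          ultimately have "G = insert xx G - {xx}" "G' = insert xx G' - {xx}" by auto
          then show "G = G'" using \<open>insert xx G = insert xx G'\<close> by simp
        qed
        have "card U = card (insert xx ` U)" using card_image[OF injx] by simp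
        also have "\<dots> \<le> card (A - F i)" by (rule card_mono[OF _ sub]) (simp add: finA)
        also have "\<dots> \<le> card (F i - A)" by (rule diff[OF i])
        finally have "real (card U) \<le> real (card (F i - A))" by (simp only: of_nat_le_iff)
        also have "\<dots> \<le> K * real (card (\<Phi> i))" by (rule Kb[OF i])
        also have "\<dots> \<le> K * real (card (\<Phi> a))" using a(2) i K0 by (intro mult_left_mono) auto
        finally show False using RP(3) unfolding U_def by simp
      qed
    qed
  qed
  have disj: "\<forall>i\<in>Ix. \<forall>j\<in>Ix. i \<noteq> j \<longrightarrow> Gf i \<inter> Gf j = {}"
  proof (intro ballI impI)
    fix i j assume i: "i \<in> Ix" and j: "j \<in> Ix" and ij: "i \<noteq> j"
    have aux: "Gf a \<inter> Gf l = {}" if l: "l \<in> Ix" "l \<noteq> a" for l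
    proof -
      have RP: "R l \<subseteq> Y" "R l \<inter> B = {}" using Rp[OF l] by auto
      have p: "1 \<le> pi l" "pi l \<le> s" using pi_rng[OF l] by auto
      have "Gf a = insert (s+1) B" "Gf l = insert (pi l) (R l)" unfolding Gf_def using l by auto
      moreover have "s+1 \<notin> R l" "pi l \<notin> B" using RP BY(1) p unfolding Y_def by auto
      moreover have "s + 1 \<noteq> pi l" using p by simp
      ultimately show ?thesis using RP(2) by auto
    qed
    show "Gf i \<inter> Gf j = {}"
    proof (cases "i = a")
      case True then show ?thesis using aux[OF j] ij by simp
    next
      case ia: False
      show ?thesis
      proof (cases "j = a")
        case True then show ?thesis using aux[OF i ia] by blast
      next
        case ja: False
        have RP: "R i \<subseteq> Y" "R j \<subseteq> Y" using Rp[OF i ia] Rp[OF j ja] by auto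
        have p: "1 \<le> pi i" "pi i \<le> s" "1 \<le> pi j" "pi j \<le> s" using pi_rng[OF i ia] pi_rng[OF j ja] by auto
        have "pi i \<noteq> pi j" using pi_inj[OF i j ia ja] ij by blast
        moreover have "pi i \<notin> R j" "pi j \<notin> R i" using RP p unfolding Y_def by auto
        moreover have "R i \<inter> R j = {}" by (rule Rdisj[OF i j ia ja ij])
        moreover have "Gf i = insert (pi i) (R i)" "Gf j = insert (pi j) (R j)" unfolding Gf_def using ia ja by auto
        ultimately show ?thesis by auto
      qed
    qed
  qed
  have "\<exists>G. (\<forall>i\<in>{1..s+1}. G i \<in> F i) \<and> (\<forall>i\<in>{1..s+1}. \<forall>j\<in>{1..s+1}. i \<noteq> j \<longrightarrow> G i \<inter> G j = {})"
    by (rule exI[of _ Gf]) (use mem disj in \<open>simp add: Ix_def\<close>)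
  then show False using cd unfolding cross_dependent_def by blast
qed


end
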